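(* Let $\alpha,\beta$ be words over $X$ such that the word $\alpha\beta$ has no repeated letters and $|\alpha|$ and $|\beta|$ are both even, and let $x$ be any letter occurring in $\beta$. Then $$f[\alpha]\,f[\alpha\beta]=\sum_{y} s(\beta,xy)\,f[\alpha xy]\,f[(\alpha\beta)\setminus xy],$$ where the sum runs over all $y\in X$; only the letters $y\neq x$ of $\beta$ give nonzero terms.
   Context: Setting. Let $X$ be a set and $R$ a commutative ring. Let $f$ assign to each ordered pair $(x,y)\in X\times X$ an element $f[xy]\in R$, subject to $f[xy]=-f[yx]$ and $f[xx]=0$ for all $x,y\in X$. Words. A word is a finite sequence of elements (letters) of $X$. Concatenation is written by juxtaposition, $\epsilon$ is the empty word, and $|\alpha|$ is the length of $\alpha$. For words $\alpha,\beta$, the word $\alpha\setminus\beta$ is obtained from $\alpha$ by deleting every letter that occurs in $\beta$. For example, $(\alpha\beta)\setminus xy$ means $\alpha\beta$ with the letters $x$ and $y$ deleted. Sign. For words $\alpha,\beta$, set $s(\alpha,\beta)=0$ if $\alpha$ or $\beta$ has a repeated letter, or if $\beta$ contains a letter not in $\alpha$. Otherwise $s(\alpha,\beta)\in\{\pm1\}$ is the sign of the permutation that rearranges $\alpha$ into the word $\beta(\alpha\setminus\beta)$. Pfaffian. Let $\alpha=x_1\ldots x_{2n}$ be a word with distinct letters. Then $$f[\alpha]=\sum s(\alpha,y_1\ldots y_{2n})\,f[y_1y_2]\cdots f[y_{2n-1}y_{2n}],$$ where the sum is over the $(2n-1)(2n-3)\cdots1$ partitions of $\{x_1,\ldots,x_{2n}\}$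 into pairs $\{y_1,y_2\},\ldots,\{y_{2n-1},y_{2n}\}$. Each term does not depend on the order in which the pairs or their elements are listed. Further conventions: $f[\epsilon]=1$; $f[\alpha]=0$ if $\alpha$ has a repeated letter; and $f[\alpha]=0$ if $|\alpha|$ is odd. For a two-letter word this agrees with the given value $f[xy]$. *)

theory Defs
  imports "HOL-Combinatorics.Permutations"
begin

definition del_letters :: "'a list \<Rightarrow> 'a list \<Rightarrow> 'a list" where
  "del_letters \<alpha> \<beta> = filter (\<lambda>z. z \<notin> set \<beta>) \<alpha>"

definition word_sign :: "'a list \<Rightarrow> 'a list \<Rightarrow> 'r::comm_ring_1" where
  "word_sign \<alpha> \<beta> =
     (if distinct \<alpha> \<and> distinct \<beta> \<and> set \<beta> \<subseteq> set \<alpha> then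
        (let \<gamma> = \<beta> @ del_letters \<alpha> \<beta>;
             p = (THE p. p permutes {..<length \<alpha>} \<and>
                         (\<forall>i<length \<alpha>. \<gamma> ! i = \<alpha> ! p i))
         in of_int (sign p))
      else 0)"

definition pair_partitions :: "'a set \<Rightarrow> 'a set set set" where
  "pair_partitions A = {M. (\<forall>P\<in>M. P \<subseteq> A \<and> card P = 2) \<and>
                           (\<forall>P\<in>M. \<forall>Q\<in>M. P \<noteq> Q \<longrightarrow> P \<inter> Q = {}) \<and> \<Union>M = A}"

definition lists_pairing :: "'a set set \<Rightarrow> 'a list \<Rightarrow> bool" where
  "lists_pairing M ys \<longleftrightarrow> distinct ys \<and> even (length ys) \<and>
     M = {{ys ! (2*i), ys ! (2*i+1)} | i. i < length ys div 2}"

text \<open>Pfaffian f[alpha]. Each term is independent of the listing chosen.\<close>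
definition pf :: "('a \<Rightarrow> 'a \<Rightarrow> 'r::comm_ring_1) \<Rightarrow> 'a list \<Rightarrow> 'r" where
  "pf f \<alpha> =
     (if distinct \<alpha> \<and> even (length \<alpha>) then
        (\<Sum>M\<in>pair_partitions (set \<alpha>).
           (let ys = (SOME ys. lists_pairing M ys)
            in word_sign \<alpha> ys * (\<Prod>i<length ys div 2. f (ys ! (2*i)) (ys ! (2*i+1)))))
      else 0)"

end

theory Submission
  imports Defs
begin


fun idx :: "'a list \<Rightarrow> 'a \<Rightarrow> nat" where
  "idx [] y = 0"
| "idx (a # xs) y = (if a = y then 0 else Suc (idx xs y))"

lemma idx_append: "idx (xs @ ys) y = (if y \<in> set xs then idx xs y else length xs + idx ys y)"
  by (induction xs) auto

lemma idx_less: "y \<in> set xs \<Longrightarrow> idx xs y < length xs"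
  by (induction xs) auto

lemma nth_idx: "y \<in> set xs \<Longrightarrow> xs ! idx xs y = y"
  by (induction xs) auto

lemma idx_nth: "distinct xs \<Longrightarrow> i < length xs \<Longrightarrow> idx xs (xs ! i) = i"
proof (induction xs arbitrary: i)
  case (Cons a xs) then show ?case by (cases i) auto
qed simp

lemma idx_remove1:
  assumes "distinct xs" "y \<in> set xs" "u \<in> set xs" "u \<noteq> y"
  shows "idx (remove1 y xs) u = (if idx xs y < idx xs u then idx xs u - 1 else idx xs u)"
  using assms
proof (induction xs)
  case (Cons a xs)
  show ?case
  proof (cases "a = y")
    case True
    then show ?thesis using Cons.prems by auto
  next
    case False
    show ?thesis
    proof (cases "a = u")
      case True then show ?thesis using False Cons.prems by auto
    next
      case False2: False
      have "y \<in> set xs" "u \<in> set xs" using Cons.prems False False2 by auto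
      then have "0 < idx xs u" if "idx xs y < idx xs u" using that by auto
      then show ?thesis using Cons.IH[OF _ \<open>y \<in> set xs\<close> \<open>u \<in> set xs\<close>] Cons.prems False False2
        by auto
    qed
  qed
qed simp

lemma sign_lemma:
  assumes "distinct xs" "y \<in> set xs" "u \<in> set xs" "u \<noteq> y"
  shows "(-1::'r::comm_ring_1) ^ (idx xs y + idx (remove1 y xs) u)
       = - ((-1) ^ (idx xs u + idx (remove1 u xs) y))"
proof -
  have iy: "idx xs y \<noteq> idx xs u" using assms nth_idx by metis
  show ?thesis
  proof (cases "idx xs y < idx xs u")
    case True
    then have e: "idx xs y + idx (remove1 y xs) u + 1 = idx xs u + idx (remove1 u xs) y"
      using idx_remove1[OF assms] idx_remove1[OF assms(1,3,2)] assms(4) by auto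
    have "(-1::'r) ^ (idx xs u + idx (remove1 u xs) y) = - ((-1) ^ (idx xs y + idx (remove1 y xs) u))"
      by (simp flip: e)
    then show ?thesis by simp
  next
    case False
    then have "idx xs u < idx xs y" using iy by auto
    then have e: "idx xs u + idx (remove1 u xs) y + 1 = idx xs y + idx (remove1 y xs) u"
      using idx_remove1[OF assms] idx_remove1[OF assms(1,3,2)] assms(4) by auto
    show ?thesis by (simp flip: e)
  qed
qed

section \<open>Generic alternating functions\<close>

lemma neg1_sq: "(-1::'r::comm_ring_1) ^ k * (-1) ^ k = 1"
  by (simp flip: power_mult_distrib)


lemma mtf:
  fixes F :: "'a list \<Rightarrow> 'r::comm_ring_1"
  assumes alt: "\<And>\<xi> u v \<eta>. F (\<xi> @ v # u # \<eta>) = - F (\<xi> @ u # v # \<eta>)"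
  shows "y \<in> set \<gamma> \<Longrightarrow> F (\<xi> @ y # remove1 y \<gamma>) = (-1) ^ (idx \<gamma> y) * F (\<xi> @ \<gamma>)"
proof (induction \<gamma> arbitrary: \<xi>)
  case (Cons a \<gamma>)
  show ?case
  proof (cases "a = y")
    case True then show ?thesis by simp
  next
    case False
    then have y: "y \<in> set \<gamma>" using Cons.prems by auto
    have "F (\<xi> @ y # remove1 y (a # \<gamma>)) = F (\<xi> @ y # a # remove1 y \<gamma>)" using False by simp
    also have "\<dots> = - F (\<xi> @ a # y # remove1 y \<gamma>)" by (rule alt)
    also have "F (\<xi> @ a # y # remove1 y \<gamma>) = F ((\<xi> @ [a]) @ y # remove1 y \<gamma>)" by simp
    also have "\<dots> = (-1) ^ (idx \<gamma> y) * F ((\<xi> @ [a]) @ \<gamma>)" by (rule Cons.IH[OF y])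
    finally show ?thesis using False by simp
  qed
qed simp

fun csgn :: "'a list \<Rightarrow> 'a list \<Rightarrow> int" where
  "csgn [] \<gamma> = 1"
| "csgn (a # \<alpha>) \<gamma> = (-1) ^ (idx \<gamma> a) * csgn \<alpha> (remove1 a \<gamma>)"

lemma ctool:
  fixes F :: "'a list \<Rightarrow> 'r::comm_ring_1"
  assumes alt: "\<And>\<xi> u v \<eta>. F (\<xi> @ v # u # \<eta>) = - F (\<xi> @ u # v # \<eta>)"
  shows "mset \<gamma> = mset \<alpha> \<Longrightarrow> F (\<xi> @ \<gamma>) = of_int (csgn \<alpha> \<gamma>) * F (\<xi> @ \<alpha>)"
proof (induction \<alpha> arbitrary: \<xi> \<gamma>)
  case Nil then show ?case by simp
next
  case (Cons a \<alpha>)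
  have a: "a \<in> set \<gamma>" using Cons.prems by (metis list.set_intros(1) set_mset_mset)
  have m: "mset (remove1 a \<gamma>) = mset \<alpha>" using Cons.prems by simp
  have "F (\<xi> @ a # remove1 a \<gamma>) = (-1) ^ (idx \<gamma> a) * F (\<xi> @ \<gamma>)" by (rule mtf[where F=F, OF alt a])
  then have "F (\<xi> @ \<gamma>) = (-1) ^ (idx \<gamma> a) * F ((\<xi> @ [a]) @ remove1 a \<gamma>)"
    using neg1_sq[of "idx \<gamma> a", where 'r='r] by (simp add: mult.assoc[symmetric])
  also have "F ((\<xi> @ [a]) @ remove1 a \<gamma>) = of_int (csgn \<alpha> (remove1 a \<gamma>)) * F ((\<xi> @ [a]) @ \<alpha>)"
    by (rule Cons.IH[OF m])
  finally show ?case by simp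
qed



definition perm_of :: "'a list \<Rightarrow> 'a list \<Rightarrow> nat \<Rightarrow> nat" where
  "perm_of \<alpha> \<gamma> = (\<lambda>i. if i < length \<alpha> then idx \<alpha> (\<gamma> ! i) else i)"

lemma perm_of_permutes:
  assumes "distinct \<alpha>" "distinct \<gamma>" "set \<gamma> = set \<alpha>"
  shows "perm_of \<alpha> \<gamma> permutes {..<length \<alpha>}"
proof (rule bij_imp_permutes)
  have len: "length \<gamma> = length \<alpha>" using assms distinct_card by metis
  let ?p = "perm_of \<alpha> \<gamma>"
  have inj: "inj_on ?p {..<length \<alpha>}"
  proof (rule inj_onI)
    fix i j assume i: "i \<in> {..<length \<alpha>}" and j: "j \<in> {..<length \<alpha>}" and e: "?p i = ?p j"
    have gi: "\<gamma> ! i \<in> set \<alpha>" "\<gamma> ! j \<in> set \<alpha>" using i j len assms(3) nth_mem by force+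
    from e i j have "idx \<alpha> (\<gamma> ! i) = idx \<alpha> (\<gamma> ! j)" by (simp add: perm_of_def)
    then have "\<gamma> ! i = \<gamma> ! j" using nth_idx gi by metis
    then show "i = j" using assms(2) i j len by (simp add: nth_eq_iff_index_eq)
  qed
  have sub: "?p ` {..<length \<alpha>} \<subseteq> {..<length \<alpha>}"
    using len assms(3) by (auto simp: perm_of_def intro!: idx_less)
  have "?p ` {..<length \<alpha>} = {..<length \<alpha>}"
    by (rule endo_inj_surj[OF _ sub inj]) simp
  then show "bij_betw ?p {..<length \<alpha>} {..<length \<alpha>}" using inj by (simp add: bij_betw_def)
  show "\<And>x. x \<notin> {..<length \<alpha>} \<Longrightarrow> ?p x = x" by (simp add: perm_of_def)
qed

lemma word_sign_perm_of:
  assumes "distinct \<alpha>" "distinct \<gamma>" "set \<gamma> = set \<alpha>"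
  shows "word_sign \<alpha> \<gamma> = of_int (sign (perm_of \<alpha> \<gamma>))"
proof -
  have len: "length \<gamma> = length \<alpha>" using assms distinct_card by metis
  have dl: "del_letters \<alpha> \<gamma> = []" using assms(3) by (simp add: del_letters_def)
  let ?P = "\<lambda>p. p permutes {..<length \<alpha>} \<and> (\<forall>i<length \<alpha>. \<gamma> ! i = \<alpha> ! p i)"
  have P: "?P (perm_of \<alpha> \<gamma>)"
    using perm_of_permutes[OF assms] len assms(3) by (auto simp: perm_of_def intro!: nth_idx[symmetric])
  have U: "p = perm_of \<alpha> \<gamma>" if "?P p" for p
  proof
    fix i show "p i = perm_of \<alpha> \<gamma> i"
    proof (cases "i < length \<alpha>")
      case True
      then have "p i < length \<alpha>" using that permutes_in_image by fastforce
      then show ?thesis using that True assms(1) by (simp add: perm_of_def idx_nth)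
    next
      case False then show ?thesis using that by (simp add: perm_of_def permutes_def)
    qed
  qed
  have "(THE p. ?P p) = perm_of \<alpha> \<gamma>" using P U by (rule the_equality)
  then show ?thesis using assms dl by (simp add: word_sign_def)
qed

lemma perm_of_swap:
  assumes "distinct \<alpha>" "distinct (\<xi> @ u # v # \<eta>)" "set (\<xi> @ u # v # \<eta>) = set \<alpha>"
  shows "perm_of \<alpha> (\<xi> @ v # u # \<eta>) = perm_of \<alpha> (\<xi> @ u # v # \<eta>) \<circ> transpose (length \<xi>) (Suc (length \<xi>))"
proof
  fix i
  have len: "length (\<xi> @ u # v # \<eta>) = length \<alpha>" using assms distinct_card by metis
  let ?k = "length \<xi>"
  show "perm_of \<alpha> (\<xi> @ v # u # \<eta>) i = (perm_of \<alpha> (\<xi> @ u # v # \<eta>) \<circ> transpose ?k (Suc ?k)) i"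
  proof (cases "i < length \<alpha>")
    case False
    then have "transpose ?k (Suc ?k) i = i" using len by (auto simp: transpose_def)
    then show ?thesis using False by (simp add: perm_of_def)
  next
    case True
    have "(\<xi> @ v # u # \<eta>) ! i = (\<xi> @ u # v # \<eta>) ! (transpose ?k (Suc ?k) i)"
      by (auto simp: transpose_def nth_append nth_Cons split: nat.splits)
    moreover have "transpose ?k (Suc ?k) i < length \<alpha>" using True len by (auto simp: transpose_def)
    ultimately show ?thesis using True by (simp add: perm_of_def)
  qed
qed

definition WF :: "'a list \<Rightarrow> 'a list \<Rightarrow> 'r::comm_ring_1" where
  "WF \<alpha> \<gamma> = (if distinct \<gamma> \<and> set \<gamma> = set \<alpha> then word_sign \<alpha> \<gamma> else 0)"

lemma WF_alt:
  assumes "distinct \<alpha>"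
  shows "WF \<alpha> (\<xi> @ v # u # \<eta>) = - (WF \<alpha> (\<xi> @ u # v # \<eta>) :: 'r::comm_ring_1)"
proof (cases "distinct (\<xi> @ u # v # \<eta>) \<and> set (\<xi> @ u # v # \<eta>) = set \<alpha>")
  case False
  then have h: "\<not> (distinct (\<xi> @ v # u # \<eta>) \<and> set (\<xi> @ v # u # \<eta>) = set \<alpha>)" by auto
  show ?thesis unfolding WF_def by (simp only: if_not_P[OF False] if_not_P[OF h] minus_zero)
next
  case True
  have T2: "distinct (\<xi> @ v # u # \<eta>) \<and> set (\<xi> @ v # u # \<eta>) = set \<alpha>" using True by auto
  have len: "length (\<xi> @ u # v # \<eta>) = length \<alpha>" using True assms distinct_card by metis
  have p1: "permutation (perm_of \<alpha> (\<xi> @ u # v # \<eta>))"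
    using perm_of_permutes[OF assms] True permutes_imp_permutation by blast
  have p2: "permutation (transpose (length \<xi>) (Suc (length \<xi>)))"
    using permutes_swap_id[of "length \<xi>" "{..<length \<alpha>}" "Suc (length \<xi>)"] len
    by (intro permutes_imp_permutation[of "{..<length \<alpha>}"]) auto
  have "word_sign \<alpha> (\<xi> @ v # u # \<eta>) = of_int (sign (perm_of \<alpha> (\<xi> @ v # u # \<eta>)))"
    using T2 assms by (intro word_sign_perm_of) auto
  also have "\<dots> = of_int (sign (perm_of \<alpha> (\<xi> @ u # v # \<eta>) \<circ> transpose (length \<xi>) (Suc (length \<xi>))))"
    using True assms by (simp add: perm_of_swap)
  also have "\<dots> = - of_int (sign (perm_of \<alpha> (\<xi> @ u # v # \<eta>)))"
    by (simp add: sign_compose[OF p1 p2] sign_swap_id)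
  also have "\<dots> = - word_sign \<alpha> (\<xi> @ u # v # \<eta>)"
    using True assms by (simp add: word_sign_perm_of)
  finally show ?thesis using True T2 by (simp add: WF_def)
qed

lemma WF_self: "distinct \<alpha> \<Longrightarrow> WF \<alpha> \<alpha> = 1"
proof -
  assume d: "distinct \<alpha>"
  have "perm_of \<alpha> \<alpha> = id"
    using d by (auto simp: perm_of_def idx_nth fun_eq_iff)
  then show ?thesis using d by (simp add: WF_def word_sign_perm_of sign_id)
qed



function pfr :: "('a \<Rightarrow> 'a \<Rightarrow> 'r::comm_ring_1) \<Rightarrow> 'a list \<Rightarrow> 'r" where
  "pfr f [] = 1"
| "pfr f (a # \<gamma>) = (\<Sum>y\<in>set \<gamma>. (-1) ^ (idx \<gamma> y) * f a y * pfr f (remove1 y \<gamma>))"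
  by pat_completeness auto
termination
  by (relation "measure (\<lambda>(f, xs). length xs)") (auto simp: length_remove1)

lemma sum_swap_pairs:
  assumes "finite A"
  shows "(\<Sum>y\<in>A. \<Sum>w\<in>A - {y}. g y w) = (\<Sum>w\<in>A. \<Sum>y\<in>A - {w}. g y w)"
proof -
  have e: "\<And>y h. (\<Sum>w\<in>A - {y}. h w) = (\<Sum>w\<in>A. if w \<noteq> y then h w else 0)"
    using assms by (simp add: Diff_eq sum.inter_restrict)
  have "(\<Sum>y\<in>A. \<Sum>w\<in>A - {y}. g y w) = (\<Sum>y\<in>A. \<Sum>w\<in>A. if w \<noteq> y then g y w else 0)"
    by (simp add: e)
  also have "\<dots> = (\<Sum>w\<in>A. \<Sum>y\<in>A. if w \<noteq> y then g y w else 0)" by (rule sum.swap)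
  also have "\<dots> = (\<Sum>w\<in>A. \<Sum>y\<in>A - {w}. g y w)"
    by (simp add: e eq_commute)
  finally show ?thesis .
qed

lemma pfr_expand2:
  assumes "distinct (u # v # \<eta>)"
  shows "pfr f (u # v # \<eta>) = f u v * pfr f \<eta> -
    (\<Sum>y\<in>set \<eta>. \<Sum>w\<in>set \<eta> - {y}. (-1) ^ (idx \<eta> y + idx (remove1 y \<eta>) w) *
        (f u y * f v w * pfr f (remove1 w (remove1 y \<eta>))))"
proof -
  have v: "v \<notin> set \<eta>" using assms by auto
  have "pfr f (u # v # \<eta>) = f u v * pfr f \<eta> +
     (\<Sum>y\<in>set \<eta>. (-1) ^ (idx (v # \<eta>) y) * f u y * pfr f (remove1 y (v # \<eta>)))"
    using v by (simp add: sum.insert)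
  also have "(\<Sum>y\<in>set \<eta>. (-1) ^ (idx (v # \<eta>) y) * f u y * pfr f (remove1 y (v # \<eta>)))
     = (\<Sum>y\<in>set \<eta>. - ((-1) ^ (idx \<eta> y) * f u y * pfr f (v # remove1 y \<eta>)))"
    by (rule sum.cong) (use v in auto)
  also have "\<dots> = - (\<Sum>y\<in>set \<eta>. \<Sum>w\<in>set \<eta> - {y}. (-1) ^ (idx \<eta> y + idx (remove1 y \<eta>) w) *
        (f u y * f v w * pfr f (remove1 w (remove1 y \<eta>))))"
    using assms
    by (simp add: sum_negf sum_distrib_left set_remove1_eq power_add mult_ac)
  finally show ?thesis by simp
qed

lemma pfr_swap12:
  fixes f :: "'a \<Rightarrow> 'a \<Rightarrow> 'r::comm_ring_1"
  assumes anti: "\<And>u v. f u v = - f v u" and d: "distinct (u # v # \<eta>)"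
  shows "pfr f (v # u # \<eta>) = - pfr f (u # v # \<eta>)"
proof -
  define Q where "Q = (\<lambda>u v. \<Sum>y\<in>set \<eta>. \<Sum>w\<in>set \<eta> - {y}. (-1::'r) ^ (idx \<eta> y + idx (remove1 y \<eta>) w) *
        (f u y * f v w * pfr f (remove1 w (remove1 y \<eta>))))"
  have d2: "distinct (v # u # \<eta>)" using d by auto
  have dn: "distinct \<eta>" using d by auto
  have "Q v u = (\<Sum>w\<in>set \<eta>. \<Sum>y\<in>set \<eta> - {w}. (-1::'r) ^ (idx \<eta> y + idx (remove1 y \<eta>) w) *
        (f v y * f u w * pfr f (remove1 w (remove1 y \<eta>))))"
    unfolding Q_def by (rule sum_swap_pairs) simp
  also have "\<dots> = (\<Sum>y\<in>set \<eta>. \<Sum>w\<in>set \<eta> - {y}. - ((-1::'r) ^ (idx \<eta> y + idx (remove1 y \<eta>) w) *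
        (f u y * f v w * pfr f (remove1 w (remove1 y \<eta>)))))"
  proof (rule sum.cong[OF refl], rule sum.cong[OF refl])
    fix y w assume y: "y \<in> set \<eta>" and w: "w \<in> set \<eta> - {y}"
    have s: "(-1::'r) ^ (idx \<eta> w + idx (remove1 w \<eta>) y) = - ((-1) ^ (idx \<eta> y + idx (remove1 y \<eta>) w))"
      using sign_lemma[OF dn, of w y] y w by auto
    show "(-1::'r) ^ (idx \<eta> w + idx (remove1 w \<eta>) y) * (f v w * f u y * pfr f (remove1 y (remove1 w \<eta>))) =
          - ((-1::'r) ^ (idx \<eta> y + idx (remove1 y \<eta>) w) * (f u y * f v w * pfr f (remove1 w (remove1 y \<eta>))))"
      by (simp add: s remove1_commute mult_ac)
  qed
  also have "\<dots> = - Q u v" unfolding Q_def by (simp add: sum_negf)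
  finally have QQ: "Q v u = - Q u v" .
  have e1: "pfr f (u # v # \<eta>) = f u v * pfr f \<eta> - Q u v" unfolding Q_def by (rule pfr_expand2[OF d])
  have e2: "pfr f (v # u # \<eta>) = f v u * pfr f \<eta> - Q v u" unfolding Q_def by (rule pfr_expand2[OF d2])
  have "f v u * pfr f \<eta> - Q v u = - (f u v * pfr f \<eta> - Q u v)" using QQ anti[of v u] by (simp add: algebra_simps)
  then show ?thesis unfolding e1 e2 .
qed

lemma pfr_alt:
  fixes f :: "'a \<Rightarrow> 'a \<Rightarrow> 'r::comm_ring_1"
  assumes anti: "\<And>u v. f u v = - f v u"
  shows "distinct (\<xi> @ u # v # \<eta>) \<Longrightarrow> pfr f (\<xi> @ v # u # \<eta>) = - pfr f (\<xi> @ u # v # \<eta>)"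
proof (induction "length \<xi>" arbitrary: \<xi> \<eta> rule: less_induct)
  case less
  show ?case
  proof (cases \<xi>)
    case Nil
    then show ?thesis using pfr_swap12[where f=f, OF anti] less.prems by simp
  next
    case (Cons a \<xi>')
    let ?L1 = "\<xi>' @ u # v # \<eta>" and ?L2 = "\<xi>' @ v # u # \<eta>"
    have dL: "distinct ?L1" "a \<notin> set ?L1" using less.prems Cons by auto
    have sL: "set ?L2 = set ?L1" by auto
    have "pfr f (a # ?L2) = (\<Sum>y\<in>set ?L1. (-1) ^ (idx ?L2 y) * f a y * pfr f (remove1 y ?L2))"
      by (simp only: pfr.simps sL)
    also have "\<dots> = (\<Sum>y\<in>set ?L1. - ((-1) ^ (idx ?L1 y) * f a y * pfr f (remove1 y ?L1)))"
    proof (rule sum.cong[OF refl])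
      fix y assume y: "y \<in> set ?L1"
      have uv: "u \<noteq> v" "u \<notin> set \<xi>'" "v \<notin> set \<xi>'" "u \<notin> set \<eta>" "v \<notin> set \<eta>"
        "set \<xi>' \<inter> set \<eta> = {}" using dL by auto
      consider "y \<in> set \<xi>'" | "y = u" | "y = v" | "y \<in> set \<eta>" "y \<notin> set \<xi>'" "y \<noteq> u" "y \<noteq> v"
        using y by auto
      then show "(-1) ^ (idx ?L2 y) * f a y * pfr f (remove1 y ?L2) = - ((-1) ^ (idx ?L1 y) * f a y * pfr f (remove1 y ?L1))"
      proof cases
        case 1
        have "length (remove1 y \<xi>') < length \<xi>" using Cons 1 by (simp add: length_remove1)
        moreover have "distinct (remove1 y \<xi>' @ u # v # \<eta>)" using dL by (auto simp: distinct_remove1)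
        ultimately have "pfr f (remove1 y \<xi>' @ v # u # \<eta>) = - pfr f (remove1 y \<xi>' @ u # v # \<eta>)"
          using less.hyps by blast
        then show ?thesis using 1 by (simp add: idx_append remove1_append)
      next
        case 2
        then show ?thesis using uv by (simp add: idx_append remove1_append)
      next
        case 3
        then show ?thesis using uv by (simp add: idx_append remove1_append)
      next
        case 4
        have "length \<xi>' < length \<xi>" using Cons by simp
        moreover have "distinct (\<xi>' @ u # v # remove1 y \<eta>)" using dL by (auto simp: distinct_remove1)
        ultimately have "pfr f (\<xi>' @ v # u # remove1 y \<eta>) = - pfr f (\<xi>' @ u # v # remove1 y \<eta>)"
          using less.hyps by blast
        then show ?thesis using 4 by (simp add: idx_append remove1_append)
      qed
    qed
    also have "\<dots> = - pfr f (a # ?L1)" by (simp add: sum_negf)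
    finally show ?thesis using Cons by simp
  qed
qed

definition Fp :: "('a \<Rightarrow> 'a \<Rightarrow> 'r::comm_ring_1) \<Rightarrow> 'a list \<Rightarrow> 'r" where
  "Fp f \<gamma> = (if distinct \<gamma> then pfr f \<gamma> else 0)"

lemma Fp_alt:
  fixes f :: "'a \<Rightarrow> 'a \<Rightarrow> 'r::comm_ring_1"
  assumes anti: "\<And>u v. f u v = - f v u"
  shows "Fp f (\<xi> @ v # u # \<eta>) = - Fp f (\<xi> @ u # v # \<eta>)"
  using pfr_alt[OF anti, of \<xi> u v \<eta>] by (auto simp: Fp_def)

lemma pfr_mtf:
  fixes f :: "'a \<Rightarrow> 'a \<Rightarrow> 'r::comm_ring_1"
  assumes anti: "\<And>u v. f u v = - f v u" and d: "distinct (\<xi> @ \<gamma>)" and y: "y \<in> set \<gamma>"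
  shows "pfr f (\<xi> @ y # remove1 y \<gamma>) = (-1) ^ (idx \<gamma> y) * pfr f (\<xi> @ \<gamma>)"
proof -
  have "Fp f (\<xi> @ y # remove1 y \<gamma>) = (-1) ^ (idx \<gamma> y) * Fp f (\<xi> @ \<gamma>)"
    by (rule mtf[where F="Fp f", OF Fp_alt[OF anti] y])
  moreover have "distinct (\<xi> @ y # remove1 y \<gamma>)" using d y
    by (simp add: mset_eq_imp_distinct_iff[of "\<xi> @ y # remove1 y \<gamma>" "\<xi> @ \<gamma>"]) blast
  ultimately show ?thesis using d by (simp add: Fp_def)
qed



declare pfr.simps(2)[simp del]
lemmas pfr_Cons = pfr.simps(2)

lemma sgn_swap: "a = (-1::'r::comm_ring_1) ^ k * b \<Longrightarrow> b = (-1) ^ k * a"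
  by (simp add: mult.assoc[symmetric] neg1_sq)

lemma pfr_cons_app:
  fixes f :: "'a \<Rightarrow> 'a \<Rightarrow> 'r::comm_ring_1"
  assumes d: "distinct (x # \<alpha> @ \<beta>)"
  shows "pfr f (x # \<alpha> @ \<beta>) =
    (\<Sum>z\<in>set \<alpha>. (-1) ^ (idx \<alpha> z) * f x z * pfr f (remove1 z \<alpha> @ \<beta>)) +
    (\<Sum>z\<in>set \<beta>. (-1) ^ (length \<alpha> + idx \<beta> z) * f x z * pfr f (\<alpha> @ remove1 z \<beta>))"
proof -
  have disj: "set \<alpha> \<inter> set \<beta> = {}" using d by auto
  have "pfr f (x # \<alpha> @ \<beta>) = (\<Sum>z\<in>set \<alpha> \<union> set \<beta>. (-1) ^ (idx (\<alpha> @ \<beta>) z) * f x z * pfr f (remove1 z (\<alpha> @ \<beta>)))"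
    by (simp add: pfr_Cons)
  also have "\<dots> = (\<Sum>z\<in>set \<alpha>. (-1) ^ (idx (\<alpha> @ \<beta>) z) * f x z * pfr f (remove1 z (\<alpha> @ \<beta>))) +
      (\<Sum>z\<in>set \<beta>. (-1) ^ (idx (\<alpha> @ \<beta>) z) * f x z * pfr f (remove1 z (\<alpha> @ \<beta>)))"
    by (rule sum.union_disjoint) (use disj in auto)
  also have "(\<Sum>z\<in>set \<alpha>. (-1) ^ (idx (\<alpha> @ \<beta>) z) * f x z * pfr f (remove1 z (\<alpha> @ \<beta>))) =
      (\<Sum>z\<in>set \<alpha>. (-1) ^ (idx \<alpha> z) * f x z * pfr f (remove1 z \<alpha> @ \<beta>))"
    by (rule sum.cong) (auto simp: idx_append remove1_append)
  also have "(\<Sum>z\<in>set \<beta>. (-1) ^ (idx (\<alpha> @ \<beta>) z) * f x z * pfr f (remove1 z (\<alpha> @ \<beta>))) =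
      (\<Sum>z\<in>set \<beta>. (-1) ^ (length \<alpha> + idx \<beta> z) * f x z * pfr f (\<alpha> @ remove1 z \<beta>))"
    by (rule sum.cong) (use disj in \<open>auto simp: idx_append remove1_append\<close>)
  finally show ?thesis .
qed

lemma pow_even_add: "even n \<Longrightarrow> (-1::'r::comm_ring_1) ^ (n + k) = (-1) ^ k"
  by (simp add: power_add)

lemma pow_odd_add: "odd n \<Longrightarrow> (-1::'r::comm_ring_1) ^ (n + k) = - ((-1) ^ k)"
  by (simp add: power_add)

definition Tst :: "('a \<Rightarrow> 'a \<Rightarrow> 'r::comm_ring_1) \<Rightarrow> 'a list \<Rightarrow> 'a \<Rightarrow> 'a list \<Rightarrow> bool" where
  "Tst f \<alpha> x \<beta> \<longleftrightarrow> pfr f \<alpha> * pfr f (x # \<alpha> @ \<beta>) =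
     (\<Sum>y\<in>set \<beta>. (-1) ^ (idx \<beta> y) * pfr f (x # y # \<alpha>) * pfr f (\<alpha> @ remove1 y \<beta>))"

definition Dsum :: "('a \<Rightarrow> 'a \<Rightarrow> 'r::comm_ring_1) \<Rightarrow> 'a list \<Rightarrow> 'a list \<Rightarrow> 'r" where
  "Dsum f \<alpha> \<beta> = (\<Sum>y\<in>set \<beta>. (-1) ^ (idx \<beta> y) * pfr f (y # \<alpha>) * pfr f (\<alpha> @ remove1 y \<beta>))"

lemma T_from_D:
  fixes f :: "'a \<Rightarrow> 'a \<Rightarrow> 'r::comm_ring_1"
  assumes anti: "\<And>u v. f u v = - f v u"
    and d: "distinct (x # \<alpha> @ \<beta>)" and ev: "even (length \<alpha>)"
    and DH: "\<And>z. z \<in> set \<alpha> \<Longrightarrow> Dsum f (remove1 z \<alpha>) (z # \<beta>) = 0"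
  shows "Tst f \<alpha> x \<beta>"
proof -
  have dab: "distinct (\<alpha> @ \<beta>)" and xa: "x \<notin> set \<alpha>" and xb: "x \<notin> set \<beta>" using d by auto
  have disj: "set \<alpha> \<inter> set \<beta> = {}" using d by auto
  define P where "P = pfr f \<alpha>"
  have L: "pfr f (x # \<alpha> @ \<beta>) =
    (\<Sum>z\<in>set \<alpha>. (-1) ^ (idx \<alpha> z) * f x z * pfr f (remove1 z \<alpha> @ \<beta>)) +
    (\<Sum>y\<in>set \<beta>. (-1) ^ (idx \<beta> y) * f x y * pfr f (\<alpha> @ remove1 y \<beta>))"
    using pfr_cons_app[OF d, of f] pow_even_add[OF ev, where 'r='r] by simp
  have R1: "pfr f (x # y # \<alpha>) = f x y * P - (\<Sum>z\<in>set \<alpha>. (-1) ^ (idx \<alpha> z) * f x z * pfr f (y # remove1 z \<alpha>))"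
    if y: "y \<in> set \<beta>" for y
  proof -
    have ya: "y \<notin> set \<alpha>" using y disj by auto
    have "pfr f (x # y # \<alpha>) = f x y * P +
      (\<Sum>z\<in>set \<alpha>. (-1) ^ (idx (y # \<alpha>) z) * f x z * pfr f (remove1 z (y # \<alpha>)))"
      using ya by (simp add: pfr_Cons sum.insert P_def)
    also have "(\<Sum>z\<in>set \<alpha>. (-1) ^ (idx (y # \<alpha>) z) * f x z * pfr f (remove1 z (y # \<alpha>))) =
       (\<Sum>z\<in>set \<alpha>. - ((-1) ^ (idx \<alpha> z) * f x z * pfr f (y # remove1 z \<alpha>)))"
      by (rule sum.cong) (use ya in auto)
    finally show ?thesis by (simp add: sum_negf)
  qed
  have KEY: "P * pfr f (remove1 z \<alpha> @ \<beta>) =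
      - (\<Sum>y\<in>set \<beta>. (-1) ^ (idx \<beta> y) * pfr f (y # remove1 z \<alpha>) * pfr f (\<alpha> @ remove1 y \<beta>))"
    if z: "z \<in> set \<alpha>" for z
  proof -
    let ?a0 = "remove1 z \<alpha>"
    have zb: "z \<notin> set \<beta>" using z disj by auto
    have da: "distinct \<alpha>" using d by auto
    have oa0: "odd (length ?a0)" using ev z by (cases \<alpha>) (auto simp: length_remove1)
    have za0: "z \<notin> set ?a0" using da by simp
    have P1: "P = (-1) ^ (idx \<alpha> z) * pfr f (z # ?a0)"
    proof -
      have h: "pfr f ([] @ z # remove1 z \<alpha>) = (-1) ^ (idx \<alpha> z) * pfr f ([] @ \<alpha>)"
        by (rule pfr_mtf[OF anti]) (use da z in auto)
      then have "pfr f (z # ?a0) = (-1) ^ (idx \<alpha> z) * P" unfolding P_def by (simp only: append_Nil)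
      then show ?thesis by (rule sgn_swap)
    qed
    have P2: "pfr f (\<alpha> @ remove1 y \<beta>) = (-1) ^ (idx \<alpha> z) * pfr f (z # ?a0 @ remove1 y \<beta>)"
      if y: "y \<in> set \<beta>" for y
    proof -
      have "pfr f ([] @ z # remove1 z (\<alpha> @ remove1 y \<beta>)) = (-1) ^ (idx (\<alpha> @ remove1 y \<beta>) z) * pfr f ([] @ \<alpha> @ remove1 y \<beta>)"
        by (rule pfr_mtf[OF anti]) (use dab z in \<open>auto simp: distinct_remove1\<close>)
      then have "pfr f (z # ?a0 @ remove1 y \<beta>) = (-1) ^ (idx \<alpha> z) * pfr f (\<alpha> @ remove1 y \<beta>)"
        using z by (simp add: idx_append remove1_append)
      then show ?thesis by (rule sgn_swap)
    qed
    have P3: "pfr f (?a0 @ z # remove1 y \<beta>) = - pfr f (z # ?a0 @ remove1 y \<beta>)"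
      if y: "y \<in> set \<beta>" for y
    proof -
      have "pfr f ([] @ z # remove1 z (?a0 @ z # remove1 y \<beta>)) = (-1) ^ (idx (?a0 @ z # remove1 y \<beta>) z) * pfr f ([] @ ?a0 @ z # remove1 y \<beta>)"
        by (rule pfr_mtf[OF anti]) (use dab z zb in \<open>auto simp: distinct_remove1 dest: in_set_remove1\<close>)
      then have "pfr f (z # ?a0 @ remove1 y \<beta>) = (-1) ^ (length ?a0) * pfr f (?a0 @ z # remove1 y \<beta>)"
        using za0 by (simp add: idx_append remove1_append)
      then show ?thesis using oa0 by simp
    qed
    have DZ: "Dsum f ?a0 (z # \<beta>) = 0" by (rule DH[OF z])
    have "Dsum f ?a0 (z # \<beta>) = pfr f (z # ?a0) * pfr f (?a0 @ \<beta>) +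
        (\<Sum>y\<in>set \<beta>. (-1) ^ (idx (z # \<beta>) y) * pfr f (y # ?a0) * pfr f (?a0 @ remove1 y (z # \<beta>)))"
      unfolding Dsum_def using zb by (simp add: sum.insert)
    also have "(\<Sum>y\<in>set \<beta>. (-1) ^ (idx (z # \<beta>) y) * pfr f (y # ?a0) * pfr f (?a0 @ remove1 y (z # \<beta>))) =
        (\<Sum>y\<in>set \<beta>. (-1) ^ (idx \<beta> y) * pfr f (y # ?a0) * pfr f (z # ?a0 @ remove1 y \<beta>))"
    proof (rule sum.cong[OF refl])
      fix y assume y: "y \<in> set \<beta>"
      then have "y \<noteq> z" using zb by auto
      then show "(-1) ^ (idx (z # \<beta>) y) * pfr f (y # ?a0) * pfr f (?a0 @ remove1 y (z # \<beta>)) =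
          (-1) ^ (idx \<beta> y) * pfr f (y # ?a0) * pfr f (z # ?a0 @ remove1 y \<beta>)"
        using P3[OF y] by simp
    qed
    finally have E: "pfr f (z # ?a0) * pfr f (?a0 @ \<beta>) =
        - (\<Sum>y\<in>set \<beta>. (-1) ^ (idx \<beta> y) * pfr f (y # ?a0) * pfr f (z # ?a0 @ remove1 y \<beta>))"
      using DZ by (simp add: eq_neg_iff_add_eq_0)
    have "(\<Sum>y\<in>set \<beta>. (-1) ^ (idx \<beta> y) * pfr f (y # ?a0) * pfr f (\<alpha> @ remove1 y \<beta>)) =
        (\<Sum>y\<in>set \<beta>. (-1) ^ (idx \<alpha> z) * ((-1) ^ (idx \<beta> y) * pfr f (y # ?a0) * pfr f (z # ?a0 @ remove1 y \<beta>)))"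
      by (rule sum.cong[OF refl]) (simp only: P2 mult_ac)
    also have "\<dots> = (-1) ^ (idx \<alpha> z) * (\<Sum>y\<in>set \<beta>. (-1) ^ (idx \<beta> y) * pfr f (y # ?a0) * pfr f (z # ?a0 @ remove1 y \<beta>))"
      by (simp only: sum_distrib_left)
    finally have "- (\<Sum>y\<in>set \<beta>. (-1) ^ (idx \<beta> y) * pfr f (y # ?a0) * pfr f (\<alpha> @ remove1 y \<beta>)) =
        (-1) ^ (idx \<alpha> z) * (- (\<Sum>y\<in>set \<beta>. (-1) ^ (idx \<beta> y) * pfr f (y # ?a0) * pfr f (z # ?a0 @ remove1 y \<beta>)))"
      by simp
    also have "\<dots> = P * pfr f (?a0 @ \<beta>)" by (simp only: P1 mult.assoc E)
    finally show ?thesis by simp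
  qed
  have "(\<Sum>y\<in>set \<beta>. (-1) ^ (idx \<beta> y) * pfr f (x # y # \<alpha>) * pfr f (\<alpha> @ remove1 y \<beta>)) =
      (\<Sum>y\<in>set \<beta>. (-1) ^ (idx \<beta> y) * (f x y * P) * pfr f (\<alpha> @ remove1 y \<beta>) -
      (\<Sum>z\<in>set \<alpha>. (-1) ^ (idx \<alpha> z) * f x z * ((-1) ^ (idx \<beta> y) * pfr f (y # remove1 z \<alpha>) * pfr f (\<alpha> @ remove1 y \<beta>))))"
  proof (rule sum.cong[OF refl])
    fix y assume y: "y \<in> set \<beta>"
    show "(-1) ^ (idx \<beta> y) * pfr f (x # y # \<alpha>) * pfr f (\<alpha> @ remove1 y \<beta>) =
      (-1) ^ (idx \<beta> y) * (f x y * P) * pfr f (\<alpha> @ remove1 y \<beta>) -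
      (\<Sum>z\<in>set \<alpha>. (-1) ^ (idx \<alpha> z) * f x z * ((-1) ^ (idx \<beta> y) * pfr f (y # remove1 z \<alpha>) * pfr f (\<alpha> @ remove1 y \<beta>)))"
      unfolding R1[OF y] right_diff_distrib left_diff_distrib sum_distrib_left sum_distrib_right
      by (simp only: mult_ac)
  qed
  also have "\<dots> = (\<Sum>y\<in>set \<beta>. (-1) ^ (idx \<beta> y) * (f x y * P) * pfr f (\<alpha> @ remove1 y \<beta>)) -
      (\<Sum>y\<in>set \<beta>. \<Sum>z\<in>set \<alpha>. (-1) ^ (idx \<alpha> z) * f x z * ((-1) ^ (idx \<beta> y) * pfr f (y # remove1 z \<alpha>) * pfr f (\<alpha> @ remove1 y \<beta>)))"
    by (rule sum_subtractf)
  also have "(\<Sum>y\<in>set \<beta>. \<Sum>z\<in>set \<alpha>. (-1) ^ (idx \<alpha> z) * f x z * ((-1) ^ (idx \<beta> y) * pfr f (y # remove1 z \<alpha>) * pfr f (\<alpha> @ remove1 y \<beta>)))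
     = (\<Sum>z\<in>set \<alpha>. (-1) ^ (idx \<alpha> z) * f x z * (\<Sum>y\<in>set \<beta>. (-1) ^ (idx \<beta> y) * pfr f (y # remove1 z \<alpha>) * pfr f (\<alpha> @ remove1 y \<beta>)))"
    by (subst sum.swap) (simp only: sum_distrib_left)
  also have "\<dots> = (\<Sum>z\<in>set \<alpha>. - ((-1) ^ (idx \<alpha> z) * f x z * (P * pfr f (remove1 z \<alpha> @ \<beta>))))"
    by (rule sum.cong[OF refl]) (simp only: KEY mult_minus_right minus_minus)
  also have "\<dots> = - (P * (\<Sum>z\<in>set \<alpha>. (-1) ^ (idx \<alpha> z) * f x z * pfr f (remove1 z \<alpha> @ \<beta>)))"
    by (simp only: sum_negf sum_distrib_left mult_ac)
  finally have RR: "(\<Sum>y\<in>set \<beta>. (-1) ^ (idx \<beta> y) * pfr f (x # y # \<alpha>) * pfr f (\<alpha> @ remove1 y \<beta>)) =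
     P * (\<Sum>y\<in>set \<beta>. (-1) ^ (idx \<beta> y) * f x y * pfr f (\<alpha> @ remove1 y \<beta>)) +
     P * (\<Sum>z\<in>set \<alpha>. (-1) ^ (idx \<alpha> z) * f x z * pfr f (remove1 z \<alpha> @ \<beta>))"
    by (simp only: sum_distrib_left mult_ac diff_minus_eq_add)
  show ?thesis unfolding Tst_def L P_def[symmetric] RR by (simp only: distrib_left add.commute)
qed


lemma D_step:
  fixes f :: "'a \<Rightarrow> 'a \<Rightarrow> 'r::comm_ring_1"
  assumes anti: "\<And>u v. f u v = - f v u"
    and d: "distinct (\<alpha> @ z # \<beta>)" and od: "odd (length \<alpha>)"
    and TH: "\<And>w. w \<in> set \<alpha> \<Longrightarrow> Tst f (remove1 w \<alpha>) w \<beta>"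
    and DH: "\<And>u. u \<in> set \<beta> \<Longrightarrow> Dsum f \<alpha> (remove1 u \<beta>) = 0"
  shows "Dsum f \<alpha> (z # \<beta>) = 0"
proof -
  have da: "distinct \<alpha>" and db: "distinct \<beta>" and za: "z \<notin> set \<alpha>" and zb: "z \<notin> set \<beta>"
    and disj: "set \<alpha> \<inter> set \<beta> = {}" using d by auto
  have dab: "distinct (\<alpha> @ \<beta>)" using d by auto
  define X where "X = pfr f (z # \<alpha>) * pfr f (\<alpha> @ \<beta>)"
  have S1: "Dsum f \<alpha> (z # \<beta>) = X +
      (\<Sum>y\<in>set \<beta>. (-1) ^ (idx \<beta> y) * pfr f (y # \<alpha>) * pfr f (z # \<alpha> @ remove1 y \<beta>))"
  proof -
    have "Dsum f \<alpha> (z # \<beta>) = X +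
      (\<Sum>y\<in>set \<beta>. (-1) ^ (idx (z # \<beta>) y) * pfr f (y # \<alpha>) * pfr f (\<alpha> @ remove1 y (z # \<beta>)))"
      unfolding Dsum_def X_def using zb by (simp add: sum.insert)
    also have "(\<Sum>y\<in>set \<beta>. (-1) ^ (idx (z # \<beta>) y) * pfr f (y # \<alpha>) * pfr f (\<alpha> @ remove1 y (z # \<beta>))) =
       (\<Sum>y\<in>set \<beta>. (-1) ^ (idx \<beta> y) * pfr f (y # \<alpha>) * pfr f (z # \<alpha> @ remove1 y \<beta>))"
    proof (rule sum.cong[OF refl])
      fix y assume y: "y \<in> set \<beta>"
      then have yz: "y \<noteq> z" using zb by auto
      have "pfr f ([] @ z # remove1 z (\<alpha> @ z # remove1 y \<beta>)) = (-1) ^ (idx (\<alpha> @ z # remove1 y \<beta>) z) * pfr f ([] @ \<alpha> @ z # remove1 y \<beta>)"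
        by (rule pfr_mtf[OF anti]) (use d in \<open>auto simp: distinct_remove1 dest: in_set_remove1\<close>)
      then have "pfr f (z # \<alpha> @ remove1 y \<beta>) = (-1) ^ (length \<alpha>) * pfr f (\<alpha> @ z # remove1 y \<beta>)"
        using za by (simp add: idx_append remove1_append)
      then have e: "pfr f (\<alpha> @ z # remove1 y \<beta>) = - pfr f (z # \<alpha> @ remove1 y \<beta>)" using od by simp
      show "(-1) ^ (idx (z # \<beta>) y) * pfr f (y # \<alpha>) * pfr f (\<alpha> @ remove1 y (z # \<beta>)) =
          (-1) ^ (idx \<beta> y) * pfr f (y # \<alpha>) * pfr f (z # \<alpha> @ remove1 y \<beta>)"
        using yz by (simp add: e)
    qed
    finally show ?thesis .
  qed
  have S2: "X = (\<Sum>w\<in>set \<alpha>. \<Sum>y\<in>set \<beta>. f z w * ((-1) ^ (idx \<beta> y) * pfr f (w # y # remove1 w \<alpha>) * pfr f (remove1 w \<alpha> @ remove1 y \<beta>)))"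
  proof -
    have "X = (\<Sum>w\<in>set \<alpha>. (-1) ^ (idx \<alpha> w) * f z w * pfr f (remove1 w \<alpha>)) * pfr f (\<alpha> @ \<beta>)"
      unfolding X_def by (simp only: pfr_Cons)
    also have "\<dots> = (\<Sum>w\<in>set \<alpha>. f z w * (pfr f (remove1 w \<alpha>) * ((-1) ^ (idx \<alpha> w) * pfr f (\<alpha> @ \<beta>))))"
      unfolding sum_distrib_right by (simp only: mult_ac)
    also have "\<dots> = (\<Sum>w\<in>set \<alpha>. f z w * (pfr f (remove1 w \<alpha>) * pfr f (w # remove1 w \<alpha> @ \<beta>)))"
    proof (rule sum.cong[OF refl])
      fix w assume w: "w \<in> set \<alpha>"
      have "pfr f ([] @ w # remove1 w (\<alpha> @ \<beta>)) = (-1) ^ (idx (\<alpha> @ \<beta>) w) * pfr f ([] @ \<alpha> @ \<beta>)"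
        by (rule pfr_mtf[OF anti]) (use dab w in auto)
      then have "pfr f (w # remove1 w \<alpha> @ \<beta>) = (-1) ^ (idx \<alpha> w) * pfr f (\<alpha> @ \<beta>)"
        using w by (simp add: idx_append remove1_append)
      then show "f z w * (pfr f (remove1 w \<alpha>) * ((-1) ^ (idx \<alpha> w) * pfr f (\<alpha> @ \<beta>))) =
          f z w * (pfr f (remove1 w \<alpha>) * pfr f (w # remove1 w \<alpha> @ \<beta>))" by simp
    qed
    also have "\<dots> = (\<Sum>w\<in>set \<alpha>. \<Sum>y\<in>set \<beta>. f z w * ((-1) ^ (idx \<beta> y) * pfr f (w # y # remove1 w \<alpha>) * pfr f (remove1 w \<alpha> @ remove1 y \<beta>)))"
    proof (rule sum.cong[OF refl])
      fix w assume w: "w \<in> set \<alpha>"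
      have "Tst f (remove1 w \<alpha>) w \<beta>" by (rule TH[OF w])
      then show "f z w * (pfr f (remove1 w \<alpha>) * pfr f (w # remove1 w \<alpha> @ \<beta>)) =
        (\<Sum>y\<in>set \<beta>. f z w * ((-1) ^ (idx \<beta> y) * pfr f (w # y # remove1 w \<alpha>) * pfr f (remove1 w \<alpha> @ remove1 y \<beta>)))"
        unfolding Tst_def by (simp only: sum_distrib_left)
    qed
    finally show ?thesis .
  qed
  have S3: "pfr f (z # \<alpha> @ remove1 y \<beta>) =
     (\<Sum>w\<in>set \<alpha>. (-1) ^ (idx \<alpha> w) * f z w * pfr f (remove1 w \<alpha> @ remove1 y \<beta>)) -
     (\<Sum>u\<in>set \<beta> - {y}. (-1) ^ (idx (remove1 y \<beta>) u) * f z u * pfr f (\<alpha> @ remove1 u (remove1 y \<beta>)))"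
    if y: "y \<in> set \<beta>" for y
  proof -
    have dd: "distinct (z # \<alpha> @ remove1 y \<beta>)" using d by (auto simp: distinct_remove1 dest: in_set_remove1)
    have sr: "set (remove1 y \<beta>) = set \<beta> - {y}" using db by (simp add: set_remove1_eq)
    show ?thesis
      unfolding pfr_cons_app[OF dd] sr pow_odd_add[OF od, where 'r='r]
      by (simp add: sum_negf)
  qed
  define W1 where "W1 = (\<Sum>w\<in>set \<alpha>. \<Sum>y\<in>set \<beta>. f z w * ((-1) ^ (idx \<beta> y) * pfr f (w # y # remove1 w \<alpha>) * pfr f (remove1 w \<alpha> @ remove1 y \<beta>)))"
  define W2 where "W2 = (\<Sum>y\<in>set \<beta>. \<Sum>w\<in>set \<alpha>. (-1) ^ (idx \<beta> y) * pfr f (y # \<alpha>) * ((-1) ^ (idx \<alpha> w) * f z w * pfr f (remove1 w \<alpha> @ remove1 y \<beta>)))"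
  define U where "U = (\<Sum>y\<in>set \<beta>. \<Sum>u\<in>set \<beta> - {y}. (-1) ^ (idx \<beta> y) * pfr f (y # \<alpha>) * ((-1) ^ (idx (remove1 y \<beta>) u) * f z u * pfr f (\<alpha> @ remove1 u (remove1 y \<beta>))))"
  have S4: "(\<Sum>y\<in>set \<beta>. (-1) ^ (idx \<beta> y) * pfr f (y # \<alpha>) * pfr f (z # \<alpha> @ remove1 y \<beta>)) = W2 - U"
  proof -
    have "(\<Sum>y\<in>set \<beta>. (-1) ^ (idx \<beta> y) * pfr f (y # \<alpha>) * pfr f (z # \<alpha> @ remove1 y \<beta>)) =
      (\<Sum>y\<in>set \<beta>. (\<Sum>w\<in>set \<alpha>. (-1) ^ (idx \<beta> y) * pfr f (y # \<alpha>) * ((-1) ^ (idx \<alpha> w) * f z w * pfr f (remove1 w \<alpha> @ remove1 y \<beta>))) -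
         (\<Sum>u\<in>set \<beta> - {y}. (-1) ^ (idx \<beta> y) * pfr f (y # \<alpha>) * ((-1) ^ (idx (remove1 y \<beta>) u) * f z u * pfr f (\<alpha> @ remove1 u (remove1 y \<beta>)))))"
      by (rule sum.cong[OF refl]) (simp only: S3 right_diff_distrib sum_distrib_left)
    also have "\<dots> = W2 - U" unfolding W2_def U_def by (rule sum_subtractf)
    finally show ?thesis .
  qed
  have W: "W1 + W2 = 0"
  proof -
    have "W2 = (\<Sum>w\<in>set \<alpha>. \<Sum>y\<in>set \<beta>. (-1) ^ (idx \<beta> y) * pfr f (y # \<alpha>) * ((-1) ^ (idx \<alpha> w) * f z w * pfr f (remove1 w \<alpha> @ remove1 y \<beta>)))"
      unfolding W2_def by (rule sum.swap)
    also have "\<dots> = (\<Sum>w\<in>set \<alpha>. \<Sum>y\<in>set \<beta>. - (f z w * ((-1) ^ (idx \<beta> y) * pfr f (w # y # remove1 w \<alpha>) * pfr f (remove1 w \<alpha> @ remove1 y \<beta>))))"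
    proof (rule sum.cong[OF refl], rule sum.cong[OF refl])
      fix w y assume w: "w \<in> set \<alpha>" and y: "y \<in> set \<beta>"
      have ya: "y \<notin> set \<alpha>" using y disj by auto
      have "pfr f ([y] @ w # remove1 w \<alpha>) = (-1) ^ (idx \<alpha> w) * pfr f ([y] @ \<alpha>)"
        by (rule pfr_mtf[OF anti]) (use da ya w in auto)
      then have e1: "(-1) ^ (idx \<alpha> w) * pfr f (y # \<alpha>) = pfr f (y # w # remove1 w \<alpha>)" by simp
      have "pfr f (y # w # remove1 w \<alpha>) = - pfr f (w # y # remove1 w \<alpha>)"
        by (rule pfr_swap12[where f=f, OF anti]) (use da ya w in \<open>auto simp: distinct_remove1 dest: in_set_remove1\<close>)
      then have e2: "(-1) ^ (idx \<alpha> w) * pfr f (y # \<alpha>) = - pfr f (w # y # remove1 w \<alpha>)" using e1 by simp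
      have "(-1) ^ (idx \<beta> y) * pfr f (y # \<alpha>) * ((-1) ^ (idx \<alpha> w) * f z w * pfr f (remove1 w \<alpha> @ remove1 y \<beta>)) =
         (-1) ^ (idx \<beta> y) * ((-1) ^ (idx \<alpha> w) * pfr f (y # \<alpha>)) * f z w * pfr f (remove1 w \<alpha> @ remove1 y \<beta>)"
        by (simp only: mult_ac)
      also have "\<dots> = - (f z w * ((-1) ^ (idx \<beta> y) * pfr f (w # y # remove1 w \<alpha>) * pfr f (remove1 w \<alpha> @ remove1 y \<beta>)))"
        unfolding e2 by (simp only: mult_ac mult_minus_left mult_minus_right)
      finally show "(-1) ^ (idx \<beta> y) * pfr f (y # \<alpha>) * ((-1) ^ (idx \<alpha> w) * f z w * pfr f (remove1 w \<alpha> @ remove1 y \<beta>)) =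
         - (f z w * ((-1) ^ (idx \<beta> y) * pfr f (w # y # remove1 w \<alpha>) * pfr f (remove1 w \<alpha> @ remove1 y \<beta>)))" .
    qed
    also have "\<dots> = - W1" unfolding W1_def by (simp only: sum_negf)
    finally show ?thesis by simp
  qed
  have U0: "U = 0"
  proof -
    have "U = (\<Sum>u\<in>set \<beta>. \<Sum>y\<in>set \<beta> - {u}. (-1) ^ (idx \<beta> y) * pfr f (y # \<alpha>) * ((-1) ^ (idx (remove1 y \<beta>) u) * f z u * pfr f (\<alpha> @ remove1 u (remove1 y \<beta>))))"
      unfolding U_def by (rule sum_swap_pairs) simp
    also have "\<dots> = (\<Sum>u\<in>set \<beta>. - ((-1) ^ (idx \<beta> u) * f z u * Dsum f \<alpha> (remove1 u \<beta>)))"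
    proof (rule sum.cong[OF refl])
      fix u assume u: "u \<in> set \<beta>"
      have sr: "set (remove1 u \<beta>) = set \<beta> - {u}" using db by (simp add: set_remove1_eq)
      have "(\<Sum>y\<in>set \<beta> - {u}. (-1) ^ (idx \<beta> y) * pfr f (y # \<alpha>) * ((-1) ^ (idx (remove1 y \<beta>) u) * f z u * pfr f (\<alpha> @ remove1 u (remove1 y \<beta>)))) =
         (\<Sum>y\<in>set \<beta> - {u}. - ((-1) ^ (idx \<beta> u) * f z u * ((-1) ^ (idx (remove1 u \<beta>) y) * pfr f (y # \<alpha>) * pfr f (\<alpha> @ remove1 y (remove1 u \<beta>)))))"
      proof (rule sum.cong[OF refl])
        fix y assume y: "y \<in> set \<beta> - {u}"
        have sg: "(-1::'r) ^ (idx \<beta> y + idx (remove1 y \<beta>) u) = - ((-1) ^ (idx \<beta> u + idx (remove1 u \<beta>) y))"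
          using sign_lemma[OF db, of y u] y u by auto
        have "(-1) ^ (idx \<beta> y) * pfr f (y # \<alpha>) * ((-1) ^ (idx (remove1 y \<beta>) u) * f z u * pfr f (\<alpha> @ remove1 u (remove1 y \<beta>))) =
          (-1::'r) ^ (idx \<beta> y + idx (remove1 y \<beta>) u) * (f z u * (pfr f (y # \<alpha>) * pfr f (\<alpha> @ remove1 y (remove1 u \<beta>))))"
          by (simp only: power_add mult_ac remove1_commute)
        also have "\<dots> = - ((-1) ^ (idx \<beta> u + idx (remove1 u \<beta>) y) * (f z u * (pfr f (y # \<alpha>) * pfr f (\<alpha> @ remove1 y (remove1 u \<beta>)))))"
          by (simp only: sg mult_minus_left)
        also have "\<dots> = - ((-1) ^ (idx \<beta> u) * f z u * ((-1) ^ (idx (remove1 u \<beta>) y) * pfr f (y # \<alpha>) * pfr f (\<alpha> @ remove1 y (remove1 u \<beta>))))"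
          by (simp only: power_add mult_ac)
        finally show "(-1) ^ (idx \<beta> y) * pfr f (y # \<alpha>) * ((-1) ^ (idx (remove1 y \<beta>) u) * f z u * pfr f (\<alpha> @ remove1 u (remove1 y \<beta>))) =
          - ((-1) ^ (idx \<beta> u) * f z u * ((-1) ^ (idx (remove1 u \<beta>) y) * pfr f (y # \<alpha>) * pfr f (\<alpha> @ remove1 y (remove1 u \<beta>))))" .
      qed
      also have "\<dots> = - ((-1) ^ (idx \<beta> u) * f z u * Dsum f \<alpha> (remove1 u \<beta>))"
        unfolding Dsum_def sr by (simp only: sum_negf sum_distrib_left)
      finally show "(\<Sum>y\<in>set \<beta> - {u}. (-1) ^ (idx \<beta> y) * pfr f (y # \<alpha>) * ((-1) ^ (idx (remove1 y \<beta>) u) * f z u * pfr f (\<alpha> @ remove1 u (remove1 y \<beta>)))) =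
         - ((-1) ^ (idx \<beta> u) * f z u * Dsum f \<alpha> (remove1 u \<beta>))" .
    qed
    also have "\<dots> = 0" using DH by simp
    finally show ?thesis .
  qed
  show ?thesis unfolding S1 S4 S2 W1_def[symmetric] using W U0 by (simp add: algebra_simps)
qed

lemma TD_all:
  fixes f :: "'a \<Rightarrow> 'a \<Rightarrow> 'r::comm_ring_1"
  assumes anti: "\<And>u v. f u v = - f v u"
  shows "distinct (\<alpha> @ \<beta>) \<Longrightarrow> odd (length \<alpha>) \<Longrightarrow> Dsum f \<alpha> \<beta> = 0"
proof (induction "length \<alpha> + length \<beta>" arbitrary: \<alpha> \<beta> rule: less_induct)
  case less
  show ?case
  proof (cases \<beta>)
    case Nil then show ?thesis by (simp add: Dsum_def)
  next
    case (Cons z \<beta>1)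
    show ?thesis unfolding Cons
    proof (rule D_step[OF anti])
      show "distinct (\<alpha> @ z # \<beta>1)" using less.prems Cons by simp
      show "odd (length \<alpha>)" by (rule less.prems)
      show "Dsum f \<alpha> (remove1 u \<beta>1) = 0" if u: "u \<in> set \<beta>1" for u
      proof (rule less.hyps)
        show "length \<alpha> + length (remove1 u \<beta>1) < length \<alpha> + length \<beta>" using u Cons by (simp add: length_remove1)
        show "distinct (\<alpha> @ remove1 u \<beta>1)" using less.prems Cons by (auto simp: distinct_remove1 dest: in_set_remove1)
        show "odd (length \<alpha>)" by (rule less.prems)
      qed
      show "Tst f (remove1 w \<alpha>) w \<beta>1" if w: "w \<in> set \<alpha>" for w
      proof (rule T_from_D[OF anti])
        show "distinct (w # remove1 w \<alpha> @ \<beta>1)" using less.prems Cons w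
          by (auto simp: distinct_remove1 dest: in_set_remove1)
        show "even (length (remove1 w \<alpha>))" using less.prems w by (cases \<alpha>) (auto simp: length_remove1)
        fix v assume v: "v \<in> set (remove1 w \<alpha>)"
        have lt: "length (remove1 v (remove1 w \<alpha>)) + length (v # \<beta>1) < length \<alpha> + length \<beta>"
          using v w Cons by (auto simp: length_remove1 dest: in_set_remove1) (cases \<alpha>; simp)+
        show "Dsum f (remove1 v (remove1 w \<alpha>)) (v # \<beta>1) = 0"
        proof (rule less.hyps[OF lt])
          show "distinct (remove1 v (remove1 w \<alpha>) @ v # \<beta>1)" using less.prems Cons v w
            by (auto simp: distinct_remove1 dest: in_set_remove1)
          show "odd (length (remove1 v (remove1 w \<alpha>)))" using less.prems v w
            by (auto simp: length_remove1 dest: in_set_remove1) (cases \<alpha>; auto)+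
        qed
      qed
    qed
  qed
qed

lemma T_all:
  fixes f :: "'a \<Rightarrow> 'a \<Rightarrow> 'r::comm_ring_1"
  assumes anti: "\<And>u v. f u v = - f v u"
    and d: "distinct (x # \<alpha> @ \<beta>)" and ev: "even (length \<alpha>)"
  shows "Tst f \<alpha> x \<beta>"
proof (rule T_from_D[OF anti d ev])
  fix z assume z: "z \<in> set \<alpha>"
  show "Dsum f (remove1 z \<alpha>) (z # \<beta>) = 0"
  proof (rule TD_all[OF anti])
    show "distinct (remove1 z \<alpha> @ z # \<beta>)" using d z by (auto simp: distinct_remove1 dest: in_set_remove1)
    show "odd (length (remove1 z \<alpha>))" using ev z by (cases \<alpha>) (auto simp: length_remove1)
  qed
qed



fun pp :: "('a \<Rightarrow> 'a \<Rightarrow> 'r::comm_ring_1) \<Rightarrow> 'a list \<Rightarrow> 'r" where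
  "pp f (u # v # zs) = f u v * pp f zs"
| "pp f _ = 1"

fun pset :: "'a list \<Rightarrow> 'a set set" where
  "pset (u # v # zs) = insert {u, v} (pset zs)"
| "pset _ = {}"

lemma pp_prod: "even (length ys) \<Longrightarrow> (\<Prod>i<length ys div 2. f (ys ! (2*i)) (ys ! (2*i+1))) = pp f ys"
proof (induction f ys rule: pp.induct)
  case (1 f u v zs)
  have "(\<Prod>i<length (u # v # zs) div 2. f ((u # v # zs) ! (2*i)) ((u # v # zs) ! (2*i+1))) =
        (\<Prod>i<Suc (length zs div 2). f ((u # v # zs) ! (2*i)) ((u # v # zs) ! (2*i+1)))" by simp
  also have "\<dots> = f u v * (\<Prod>i<length zs div 2. f (zs ! (2*i)) (zs ! (2*i+1)))"
    by (subst prod.lessThan_Suc_shift) simp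
  finally show ?case using 1 by simp
qed auto

lemma pset_eq: "even (length ys) \<Longrightarrow> {{ys ! (2*i), ys ! (2*i+1)} | i. i < length ys div 2} = pset ys"
proof (induction ys rule: pset.induct)
  case (1 u v zs)
  have "{{(u # v # zs) ! (2*i), (u # v # zs) ! (2*i+1)} | i. i < length (u # v # zs) div 2} =
        insert {u, v} {{zs ! (2*i), zs ! (2*i+1)} | i. i < length zs div 2}"
  proof (rule set_eqI, rule iffI)
    fix P assume "P \<in> {{(u # v # zs) ! (2*i), (u # v # zs) ! (2*i+1)} | i. i < length (u # v # zs) div 2}"
    then obtain i where i: "i < Suc (length zs div 2)" and P: "P = {(u # v # zs) ! (2*i), (u # v # zs) ! (2*i+1)}" by auto
    show "P \<in> insert {u, v} {{zs ! (2*i), zs ! (2*i+1)} | i. i < length zs div 2}"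
    proof (cases i)
      case 0 then show ?thesis using P by simp
    next
      case (Suc j) then show ?thesis using P i by auto
    qed
  next
    fix P assume "P \<in> insert {u, v} {{zs ! (2*i), zs ! (2*i+1)} | i. i < length zs div 2}"
    then consider "P = {u, v}" | j where "j < length zs div 2" "P = {zs ! (2*j), zs ! (2*j+1)}" by auto
    then show "P \<in> {{(u # v # zs) ! (2*i), (u # v # zs) ! (2*i+1)} | i. i < length (u # v # zs) div 2}"
    proof cases
      case 1 then show ?thesis by (intro CollectI exI[of _ 0]) auto
    next
      case 2 then show ?thesis by (intro CollectI exI[of _ "Suc j"]) auto
    qed
  qed
  then show ?case using 1 by simp
qed auto

lemma lists_pairing_iff: "lists_pairing M ys \<longleftrightarrow> distinct ys \<and> even (length ys) \<and> M = pset ys"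
  using pset_eq[of ys] unfolding lists_pairing_def by (cases "even (length ys)") simp_all

lemma pset_sub: "P \<in> pset ys \<Longrightarrow> P \<subseteq> set ys"
  by (induction ys rule: pset.induct) auto

lemma Union_pset: "even (length ys) \<Longrightarrow> \<Union>(pset ys) = set ys"
  by (induction ys rule: pset.induct) auto

lemma pset_card: "distinct ys \<Longrightarrow> P \<in> pset ys \<Longrightarrow> card P = 2"
  by (induction ys rule: pset.induct) auto

lemma pset_disj: "distinct ys \<Longrightarrow> P \<in> pset ys \<Longrightarrow> Q \<in> pset ys \<Longrightarrow> P \<noteq> Q \<Longrightarrow> P \<inter> Q = {}"
proof (induction ys rule: pset.induct)
  case (1 u v zs)
  have "u \<notin> R" "v \<notin> R" if "R \<in> pset zs" for R using pset_sub[OF that] 1(2) by auto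
  then show ?case using 1 by auto
qed auto

lemma pset_append: "even (length xs) \<Longrightarrow> pset (xs @ ys) = pset xs \<union> pset ys"
  by (induction xs rule: pset.induct) auto

lemma pp_append: "even (length xs) \<Longrightarrow> pp f (xs @ ys) = pp f xs * pp f ys"
  by (induction f xs rule: pp.induct) auto

lemma pset_empty: "even (length ys) \<Longrightarrow> pset ys = {} \<Longrightarrow> ys = []"
  by (cases ys rule: pset.cases) auto

lemma pset_mem_decomp:
  "P \<in> pset ys \<Longrightarrow> \<exists>ys1 a b ys2. ys = ys1 @ a # b # ys2 \<and> even (length ys1) \<and> P = {a, b}"
proof (induction ys rule: pset.induct)
  case (1 u v zs)
  show ?case
  proof (cases "P = {u, v}")
    case True then show ?thesis by (intro exI[of _ "[]"]) auto
  next
    case False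
    then have "P \<in> pset zs" using 1 by simp
    then obtain ys1 a b ys2 where "zs = ys1 @ a # b # ys2" "even (length ys1)" "P = {a, b}" using 1 by blast
    then show ?thesis by (intro exI[of _ "u # v # ys1"]) auto
  qed
qed auto

lemma listing_exists:
  "finite M \<Longrightarrow> (\<forall>P\<in>M. card P = 2) \<Longrightarrow> (\<forall>P\<in>M. \<forall>Q\<in>M. P \<noteq> Q \<longrightarrow> P \<inter> Q = {}) \<Longrightarrow>
    \<exists>ys. distinct ys \<and> even (length ys) \<and> pset ys = M"
proof (induction M rule: finite_induct)
  case empty then show ?case by (intro exI[of _ "[]"]) auto
next
  case (insert P M)
  then obtain ys where ys: "distinct ys" "even (length ys)" "pset ys = M" by auto
  have "card P = 2" using insert.prems(1) by simp
  then obtain u v where P: "P = {u, v}" "u \<noteq> v" unfolding card_2_iff by blast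
  have "P \<inter> Q = {}" if "Q \<in> M" for Q using insert.prems(2) insert.hyps(2) that by auto
  then have "u \<notin> set ys" "v \<notin> set ys" using Union_pset[OF ys(2)] ys(3) P by auto
  then show ?case using ys P by (intro exI[of _ "u # v # ys"]) auto
qed

section \<open>Independence of the listing\<close>

lemma move_pair:
  fixes \<Phi> :: "'a list \<Rightarrow> 'r"
  assumes pswap: "\<And>\<xi> a b c d \<eta>. even (length \<xi>) \<Longrightarrow> \<Phi> (\<xi> @ c # d # a # b # \<eta>) = \<Phi> (\<xi> @ a # b # c # d # \<eta>)"
  shows "even (length ys1) \<Longrightarrow> even (length \<xi>) \<Longrightarrow> \<Phi> (\<xi> @ ys1 @ a # b # ys2) = \<Phi> (\<xi> @ a # b # ys1 @ ys2)"
proof (induction ys1 arbitrary: \<xi> rule: pset.induct)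
  case (1 c d ys1)
  have "\<Phi> (\<xi> @ (c # d # ys1) @ a # b # ys2) = \<Phi> ((\<xi> @ [c, d]) @ ys1 @ a # b # ys2)" by simp
  also have "\<dots> = \<Phi> ((\<xi> @ [c, d]) @ a # b # ys1 @ ys2)" by (rule 1(1)) (use 1 in auto)
  also have "\<dots> = \<Phi> (\<xi> @ c # d # a # b # (ys1 @ ys2))" by simp
  also have "\<dots> = \<Phi> (\<xi> @ a # b # c # d # (ys1 @ ys2))" by (rule pswap[OF 1(3)])
  finally show ?case by simp
qed auto

lemma indep:
  fixes \<Phi> :: "'a list \<Rightarrow> 'r"
  assumes flip: "\<And>\<xi> u v \<eta>. even (length \<xi>) \<Longrightarrow> \<Phi> (\<xi> @ v # u # \<eta>) = \<Phi> (\<xi> @ u # v # \<eta>)"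
    and pswap: "\<And>\<xi> a b c d \<eta>. even (length \<xi>) \<Longrightarrow> \<Phi> (\<xi> @ c # d # a # b # \<eta>) = \<Phi> (\<xi> @ a # b # c # d # \<eta>)"
  shows "distinct ys \<Longrightarrow> distinct zs \<Longrightarrow> even (length ys) \<Longrightarrow> even (length zs) \<Longrightarrow> pset ys = pset zs \<Longrightarrow>
    even (length \<xi>) \<Longrightarrow> \<Phi> (\<xi> @ ys) = \<Phi> (\<xi> @ zs)"
proof (induction zs arbitrary: \<xi> ys rule: pset.induct)
  case (1 p q zs')
  have "{p, q} \<in> pset ys" using 1 by simp
  then obtain ys1 a b ys2 where ys: "ys = ys1 @ a # b # ys2" "even (length ys1)" "{p, q} = {a, b}"
    using pset_mem_decomp by metis
  have "\<Phi> (\<xi> @ ys) = \<Phi> (\<xi> @ a # b # ys1 @ ys2)" using move_pair[where \<Phi>=\<Phi>, OF pswap] ys 1 by simp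
  also have "\<dots> = \<Phi> (\<xi> @ p # q # ys1 @ ys2)"
  proof (cases "a = p")
    case True then have "b = q" using ys(3) 1(2) by (auto simp: doubleton_eq_iff)
    then show ?thesis using True by simp
  next
    case False then have "a = q" "b = p" using ys(3) by (auto simp: doubleton_eq_iff)
    then show ?thesis using flip[OF 1(7)] by simp
  qed
  also have "\<dots> = \<Phi> ((\<xi> @ [p, q]) @ (ys1 @ ys2))" by simp
  also have "\<dots> = \<Phi> ((\<xi> @ [p, q]) @ zs')"
  proof (rule 1(1))
    show "distinct (ys1 @ ys2)" "even (length (ys1 @ ys2))" using 1 ys by auto
    show "distinct zs'" "even (length zs')" "even (length (\<xi> @ [p, q]))" using 1 by auto
    have ab: "a \<notin> set (ys1 @ ys2)" "b \<notin> set (ys1 @ ys2)" using 1(2) ys by auto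
    have pq: "p \<notin> set zs'" "q \<notin> set zs'" using 1(3) by auto
    have e1: "pset ys = insert {a, b} (pset (ys1 @ ys2))" using ys by (simp add: pset_append)
    have n1: "{a, b} \<notin> pset (ys1 @ ys2)" using ab pset_sub by blast
    have n2: "{p, q} \<notin> pset zs'" using pq pset_sub by blast
    have "pset (ys1 @ ys2) = pset ys - {{a, b}}" using e1 n1 by auto
    also have "\<dots> = pset (p # q # zs') - {{p, q}}" using 1(6) ys(3) by simp
    also have "\<dots> = pset zs'" using n2 by auto
    finally show "pset (ys1 @ ys2) = pset zs'" .
  qed
  finally show ?case by simp
next
  case "2_1"
  then show ?case using pset_empty[of ys] by simp
next
  case ("2_2" v)
  then show ?case by simp
qed



lemma PP_finite: "finite S \<Longrightarrow> finite (pair_partitions S)"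
proof -
  assume fS: "finite S"
  have "pair_partitions S \<subseteq> Pow (Pow S)" unfolding pair_partitions_def by auto
  then show ?thesis using fS by (meson finite_Pow_iff finite_subset)
qed

lemma PP_bij:
  assumes aS: "a \<notin> S"
  shows "bij_betw (\<lambda>(y, M'). insert {a, y} M') (Sigma S (\<lambda>y. pair_partitions (S - {y}))) (pair_partitions (insert a S))"
  unfolding bij_betw_def
proof (intro conjI)
  show "inj_on (\<lambda>(y, M'). insert {a, y} M') (Sigma S (\<lambda>y. pair_partitions (S - {y})))"
  proof (rule inj_onI, clarify)
    fix y1 M1 y2 M2
    assume y1: "y1 \<in> S" and M1: "M1 \<in> pair_partitions (S - {y1})"
      and y2: "y2 \<in> S" and M2: "M2 \<in> pair_partitions (S - {y2})"
      and e: "insert {a, y1} M1 = insert {a, y2} M2"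
    have U1: "\<Union>M1 = S - {y1}" and U2: "\<Union>M2 = S - {y2}" using M1 M2 unfolding pair_partitions_def by auto
    have n1: "{a, y1} \<notin> M1" using U1 aS by blast
    have n2: "{a, y2} \<notin> M2" using U2 aS by blast
    have "{a, y1} \<in> insert {a, y2} M2" using e by blast
    then have "{a, y1} = {a, y2}" using U2 aS by blast
    then have yy: "y1 = y2" using y1 y2 aS by (auto simp: doubleton_eq_iff)
    have "M1 = insert {a, y1} M1 - {{a, y1}}" using n1 by auto
    also have "\<dots> = insert {a, y2} M2 - {{a, y2}}" using e yy by simp
    also have "\<dots> = M2" using n2 by auto
    finally show "y1 = y2 \<and> M1 = M2" using yy by simp
  qed
  show "(\<lambda>(y, M'). insert {a, y} M') ` Sigma S (\<lambda>y. pair_partitions (S - {y})) = pair_partitions (insert a S)"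
  proof (rule set_eqI, rule iffI)
    fix M assume "M \<in> (\<lambda>(y, M'). insert {a, y} M') ` Sigma S (\<lambda>y. pair_partitions (S - {y}))"
    then obtain y M' where y: "y \<in> S" and M': "M' \<in> pair_partitions (S - {y})" and M: "M = insert {a, y} M'"
      by auto
    have ay: "a \<noteq> y" using y aS by auto
    have P1: "\<forall>P\<in>M'. P \<subseteq> S - {y} \<and> card P = 2" and P2: "\<forall>P\<in>M'. \<forall>Q\<in>M'. P \<noteq> Q \<longrightarrow> P \<inter> Q = {}"
      and P3: "\<Union>M' = S - {y}" using M' unfolding pair_partitions_def by auto
    show "M \<in> pair_partitions (insert a S)"
      unfolding pair_partitions_def M
    proof (intro CollectI conjI ballI impI)
      fix P assume "P \<in> insert {a, y} M'"
      then show "P \<subseteq> insert a S" "card P = 2" using P1 y ay by auto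
    next
      fix P Q assume P: "P \<in> insert {a, y} M'" and Q: "Q \<in> insert {a, y} M'" and PQ: "P \<noteq> Q"
      have "R \<inter> {a, y} = {}" if "R \<in> M'" for R using P1 that aS by auto
      then show "P \<inter> Q = {}" using P Q PQ P2 by auto
    next
      show "\<Union>(insert {a, y} M') = insert a S" using P3 y by auto
    qed
  next
    fix M assume M: "M \<in> pair_partitions (insert a S)"
    have P1: "\<forall>P\<in>M. P \<subseteq> insert a S \<and> card P = 2" and P2: "\<forall>P\<in>M. \<forall>Q\<in>M. P \<noteq> Q \<longrightarrow> P \<inter> Q = {}"
      and P3: "\<Union>M = insert a S" using M unfolding pair_partitions_def by auto
    obtain P where P: "P \<in> M" "a \<in> P" using P3 by auto
    obtain u v where uv: "P = {u, v}" "u \<noteq> v" using P1 P(1) card_2_iff by metis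
    obtain y where Py: "P = {a, y}" "y \<noteq> a" using uv P(2) by auto
    have y: "y \<in> S" using P1 P(1) Py by auto
    define M' where "M' = M - {P}"
    have Q1: "Q \<subseteq> S - {y} \<and> card Q = 2" if "Q \<in> M'" for Q
    proof -
      have "Q \<in> M" "Q \<noteq> P" using that M'_def by auto
      then have "Q \<inter> P = {}" using P2 P(1) by auto
      then show ?thesis using P1 \<open>Q \<in> M\<close> Py by auto
    qed
    have "M' \<in> pair_partitions (S - {y})"
      unfolding pair_partitions_def
    proof (intro CollectI conjI ballI impI)
      fix Q assume "Q \<in> M'" then show "Q \<subseteq> S - {y}" "card Q = 2" using Q1 by auto
    next
      fix Q R assume "Q \<in> M'" "R \<in> M'" "Q \<noteq> R" then show "Q \<inter> R = {}" using P2 M'_def by auto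
    next
      show "\<Union>M' = S - {y}"
      proof
        show "\<Union>M' \<subseteq> S - {y}" using Q1 by auto
        show "S - {y} \<subseteq> \<Union>M'"
        proof
          fix z assume z: "z \<in> S - {y}"
          then obtain Q where Q: "Q \<in> M" "z \<in> Q" using P3 by auto
          have "Q \<noteq> P" using Q z Py aS by auto
          then show "z \<in> \<Union>M'" using Q M'_def by auto
        qed
      qed
    qed
    moreover have "M = insert {a, y} M'" using P(1) Py M'_def by auto
    ultimately show "M \<in> (\<lambda>(y, M'). insert {a, y} M') ` Sigma S (\<lambda>y. pair_partitions (S - {y}))"
      using y by auto
  qed
qed

definition Tm :: "('a \<Rightarrow> 'a \<Rightarrow> 'r::comm_ring_1) \<Rightarrow> 'a list \<Rightarrow> 'a set set \<Rightarrow> 'r" where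
  "Tm f \<alpha> M = (let ys = (SOME ys. lists_pairing M ys)
            in word_sign \<alpha> ys * (\<Prod>i<length ys div 2. f (ys ! (2*i)) (ys ! (2*i+1))))"

lemma pf_Tm: "distinct \<alpha> \<Longrightarrow> even (length \<alpha>) \<Longrightarrow> pf f \<alpha> = (\<Sum>M\<in>pair_partitions (set \<alpha>). Tm f \<alpha> M)"
  by (simp add: pf_def Tm_def)

lemma Phi_flip:
  fixes f :: "'a \<Rightarrow> 'a \<Rightarrow> 'r::comm_ring_1"
  assumes anti: "\<And>u v. f u v = - f v u" and da: "distinct \<alpha>" and ev: "even (length \<xi>)"
  shows "WF \<alpha> (\<xi> @ v # u # \<eta>) * pp f (\<xi> @ v # u # \<eta>) = (WF \<alpha> (\<xi> @ u # v # \<eta>) :: 'r) * pp f (\<xi> @ u # v # \<eta>)"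
  using WF_alt[OF da, of \<xi> v u \<eta>, where 'r='r] anti[of v u] ev by (simp add: pp_append)

lemma Phi_pswap:
  fixes f :: "'a \<Rightarrow> 'a \<Rightarrow> 'r::comm_ring_1"
  assumes da: "distinct \<alpha>" and ev: "even (length \<xi>)"
  shows "WF \<alpha> (\<xi> @ c # d # a # b # \<eta>) * pp f (\<xi> @ c # d # a # b # \<eta>) = (WF \<alpha> (\<xi> @ a # b # c # d # \<eta>) :: 'r) * pp f (\<xi> @ a # b # c # d # \<eta>)"
proof -
  have s1: "WF \<alpha> (\<xi> @ c # a # d # b # \<eta>) = - (WF \<alpha> (\<xi> @ c # d # a # b # \<eta>) :: 'r)"
    using WF_alt[OF da, of "\<xi> @ [c]" d a "b # \<eta>", where 'r='r] by simp
  have s2: "WF \<alpha> (\<xi> @ a # c # d # b # \<eta>) = - (WF \<alpha> (\<xi> @ c # a # d # b # \<eta>) :: 'r)"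
    using WF_alt[OF da, of \<xi> c a "d # b # \<eta>", where 'r='r] by simp
  have s3: "WF \<alpha> (\<xi> @ a # c # b # d # \<eta>) = - (WF \<alpha> (\<xi> @ a # c # d # b # \<eta>) :: 'r)"
    using WF_alt[OF da, of "\<xi> @ [a, c]" d b \<eta>, where 'r='r] by simp
  have s4: "WF \<alpha> (\<xi> @ a # b # c # d # \<eta>) = - (WF \<alpha> (\<xi> @ a # c # b # d # \<eta>) :: 'r)"
    using WF_alt[OF da, of "\<xi> @ [a]" c b "d # \<eta>", where 'r='r] by simp
  have w: "WF \<alpha> (\<xi> @ a # b # c # d # \<eta>) = (WF \<alpha> (\<xi> @ c # d # a # b # \<eta>) :: 'r)"
    using s1 s2 s3 s4 by simp
  have p: "pp f (\<xi> @ c # d # a # b # \<eta>) = pp f (\<xi> @ a # b # c # d # \<eta>)"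
    using ev by (simp add: pp_append mult_ac)
  show ?thesis using w p by simp
qed

lemma Tm_eq:
  fixes f :: "'a \<Rightarrow> 'a \<Rightarrow> 'r::comm_ring_1"
  assumes anti: "\<And>u v. f u v = - f v u" and da: "distinct \<alpha>"
    and M: "M \<in> pair_partitions (set \<alpha>)" and L: "lists_pairing M ys"
  shows "Tm f \<alpha> M = WF \<alpha> ys * pp f ys"
proof -
  define ys0 where "ys0 = (SOME ys. lists_pairing M ys)"
  have L0: "lists_pairing M ys0" unfolding ys0_def using L by (rule someI)
  have L0': "distinct ys0" "even (length ys0)" "M = pset ys0" using L0 lists_pairing_iff by auto
  have L': "distinct ys" "even (length ys)" "M = pset ys" using L lists_pairing_iff by auto
  have UM: "\<Union>M = set \<alpha>" using M unfolding pair_partitions_def by auto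
  have s0: "set ys0 = set \<alpha>" using Union_pset[OF L0'(2)] L0'(3) UM by simp
  have "Tm f \<alpha> M = word_sign \<alpha> ys0 * pp f ys0" unfolding Tm_def ys0_def[symmetric] Let_def
    using pp_prod[OF L0'(2), where f=f] by simp
  also have "\<dots> = WF \<alpha> ys0 * pp f ys0" using L0'(1) s0 by (simp add: WF_def)
  also have "\<dots> = WF \<alpha> ys * pp f ys"
  proof -
    have "WF \<alpha> ([] @ ys0) * pp f ([] @ ys0) = WF \<alpha> ([] @ ys) * pp f ([] @ ys)"
      by (rule indep[where \<Phi>="\<lambda>zs. WF \<alpha> zs * pp f zs", OF Phi_flip[where f=f, OF anti da] Phi_pswap[where f=f, OF da]])
         (use L0' L' in auto)
    then show ?thesis by simp
  qed
  finally show ?thesis by simp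
qed

lemma pf_pfr:
  fixes f :: "'a \<Rightarrow> 'a \<Rightarrow> 'r::comm_ring_1"
  assumes anti: "\<And>u v. f u v = - f v u"
  shows "distinct \<alpha> \<Longrightarrow> even (length \<alpha>) \<Longrightarrow> pf f \<alpha> = pfr f \<alpha>"
proof (induction "length \<alpha>" arbitrary: \<alpha> rule: less_induct)
  case less
  show ?case
  proof (cases \<alpha>)
    case Nil
    have PP0: "pair_partitions ({} :: 'a set) = {{}}" unfolding pair_partitions_def by auto
    have S: "(SOME ys. lists_pairing {} ys) = ([] :: 'a list)"
      by (rule some_equality) (auto simp: lists_pairing_iff dest: pset_empty)
    have W0: "WF ([] :: 'a list) [] = (1::'r)" by (rule WF_self) simp
    have W: "word_sign ([] :: 'a list) [] = (1::'r)" using W0 by (simp add: WF_def)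
    have "Tm f [] {} = 1" unfolding Tm_def S Let_def using W by simp
    then show ?thesis using Nil pf_Tm[of "[]" f] PP0 by simp
  next
    case (Cons a \<gamma>)
    have da: "distinct (a # \<gamma>)" using less.prems Cons by simp
    have aS: "a \<notin> set \<gamma>" and dg: "distinct \<gamma>" using da by auto
    have og: "odd (length \<gamma>)" using less.prems Cons by simp
    have fin: "finite (pair_partitions (set \<gamma> - {y}))" for y by (rule PP_finite) simp
    have "pf f (a # \<gamma>) = (\<Sum>M\<in>pair_partitions (insert a (set \<gamma>)). Tm f (a # \<gamma>) M)"
      using pf_Tm[OF da] less.prems Cons by simp
    also have "\<dots> = (\<Sum>x\<in>Sigma (set \<gamma>) (\<lambda>y. pair_partitions (set \<gamma> - {y})). Tm f (a # \<gamma>) ((\<lambda>(y, M'). insert {a, y} M') x))"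
      by (rule sum.reindex_bij_betw[OF PP_bij[OF aS], symmetric])
    also have "\<dots> = (\<Sum>(y, M')\<in>Sigma (set \<gamma>) (\<lambda>y. pair_partitions (set \<gamma> - {y})). Tm f (a # \<gamma>) (insert {a, y} M'))"
      by (rule sum.cong[OF refl]) auto
    also have "\<dots> = (\<Sum>y\<in>set \<gamma>. \<Sum>M'\<in>pair_partitions (set \<gamma> - {y}). Tm f (a # \<gamma>) (insert {a, y} M'))"
      by (rule sum.Sigma[symmetric]) (auto simp: fin)
    also have "\<dots> = (\<Sum>y\<in>set \<gamma>. (-1) ^ (idx \<gamma> y) * f a y * pf f (remove1 y \<gamma>))"
    proof (rule sum.cong[OF refl])
      fix y assume y: "y \<in> set \<gamma>"
      have ay: "a \<noteq> y" using y aS by auto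
      let ?g = "remove1 y \<gamma>"
      have sg: "set ?g = set \<gamma> - {y}" using dg by (simp add: set_remove1_eq)
      have dg': "distinct ?g" using dg by simp
      have eg: "even (length ?g)" using og y by (cases \<gamma>) (auto simp: length_remove1)
      have lt: "length ?g < length \<alpha>" using Cons y by (cases \<gamma>) (auto simp: length_remove1)
      have IH: "pf f ?g = pfr f ?g" using less.hyps[OF lt dg' eg] .
      have "(\<Sum>M'\<in>pair_partitions (set \<gamma> - {y}). Tm f (a # \<gamma>) (insert {a, y} M')) =
            (\<Sum>M'\<in>pair_partitions (set \<gamma> - {y}). (-1) ^ (idx \<gamma> y) * f a y * Tm f ?g M')"
      proof (rule sum.cong[OF refl])
        fix M' assume M': "M' \<in> pair_partitions (set \<gamma> - {y})"
        have P1: "\<forall>P\<in>M'. P \<subseteq> set \<gamma> - {y} \<and> card P = 2" and P2: "\<forall>P\<in>M'. \<forall>Q\<in>M'. P \<noteq> Q \<longrightarrow> P \<inter> Q = {}"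
          and P3: "\<Union>M' = set \<gamma> - {y}" using M' unfolding pair_partitions_def by auto
        have finM: "finite M'"
        proof (rule finite_subset)
          show "M' \<subseteq> Pow (set \<gamma> - {y})" using P1 by auto
        qed simp
        obtain ys' where ys': "distinct ys'" "even (length ys')" "pset ys' = M'"
          using listing_exists[OF finM] P1 P2 by blast
        have sys: "set ys' = set \<gamma> - {y}" using Union_pset[OF ys'(2)] ys'(3) P3 by simp
        have L1: "lists_pairing M' ys'" using ys' by (simp add: lists_pairing_iff)
        have L2: "lists_pairing (insert {a, y} M') (a # y # ys')"
          using ys' sys ay aS by (simp add: lists_pairing_iff)
        have M2: "insert {a, y} M' \<in> pair_partitions (set (a # \<gamma>))"
          using bij_betwE[OF PP_bij[OF aS]] y M' by fastforce
        have T1: "Tm f (a # \<gamma>) (insert {a, y} M') = WF (a # \<gamma>) (a # y # ys') * pp f (a # y # ys')"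
          by (rule Tm_eq[where f=f, OF anti da M2 L2])
        have T2: "Tm f ?g M' = WF ?g ys' * pp f ys'"
          by (rule Tm_eq[where f=f, OF anti dg']) (use M' sg L1 in auto)
        have ms: "mset ys' = mset ?g"
        proof -
          have "set ys' = set ?g" using sys sg by simp
          then show ?thesis using set_eq_iff_mset_eq_distinct[OF ys'(1) dg'] by blast
        qed
        have c1: "WF (a # \<gamma>) ([a, y] @ ys') = of_int (csgn ?g ys') * (WF (a # \<gamma>) ([a, y] @ ?g) :: 'r)"
          by (rule ctool[where F="WF (a # \<gamma>)", OF WF_alt[OF da] ms])
        have c2: "WF ?g ([] @ ys') = of_int (csgn ?g ys') * (WF ?g ([] @ ?g) :: 'r)"
          by (rule ctool[where F="WF ?g", OF WF_alt[OF dg'] ms])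
        have m1: "WF (a # \<gamma>) ([a] @ y # ?g) = (-1) ^ (idx \<gamma> y) * (WF (a # \<gamma>) ([a] @ \<gamma>) :: 'r)"
          by (rule mtf[where F="WF (a # \<gamma>)", OF WF_alt[OF da] y])
        have "WF (a # \<gamma>) (a # y # ys') = (-1) ^ (idx \<gamma> y) * (WF ?g ys' :: 'r)"
        proof -
          have w1: "WF (a # \<gamma>) (a # \<gamma>) = (1::'r)" by (rule WF_self[OF da])
          have w2: "WF ?g ?g = (1::'r)" by (rule WF_self[OF dg'])
          show ?thesis using c1 c2 m1 w1 w2 by simp
        qed
        then show "Tm f (a # \<gamma>) (insert {a, y} M') = (-1) ^ (idx \<gamma> y) * f a y * Tm f ?g M'"
          unfolding T1 T2 by (simp add: mult_ac)
      qed
      also have "\<dots> = (-1) ^ (idx \<gamma> y) * f a y * pf f ?g"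
        using pf_Tm[OF dg' eg, where f=f] sg by (simp add: sum_distrib_left)
      finally show "(\<Sum>M'\<in>pair_partitions (set \<gamma> - {y}). Tm f (a # \<gamma>) (insert {a, y} M')) =
          (-1) ^ (idx \<gamma> y) * f a y * pf f (remove1 y \<gamma>)" .
    qed
    also have "\<dots> = (\<Sum>y\<in>set \<gamma>. (-1) ^ (idx \<gamma> y) * f a y * pfr f (remove1 y \<gamma>))"
    proof (rule sum.cong[OF refl])
      fix y assume y: "y \<in> set \<gamma>"
      have eg: "even (length (remove1 y \<gamma>))" using og y by (cases \<gamma>) (auto simp: length_remove1)
      have lt: "length (remove1 y \<gamma>) < length \<alpha>" using Cons y by (cases \<gamma>) (auto simp: length_remove1)
      show "(-1) ^ (idx \<gamma> y) * f a y * pf f (remove1 y \<gamma>) = (-1) ^ (idx \<gamma> y) * f a y * pfr f (remove1 y \<gamma>)"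
        using less.hyps[OF lt _ eg] dg by simp
    qed
    also have "\<dots> = pfr f (a # \<gamma>)" by (simp only: pfr_Cons)
    finally show ?thesis using Cons by simp
  qed
qed



lemma filter_neq_remove1: "distinct xs \<Longrightarrow> filter (\<lambda>z. z \<noteq> x) xs = remove1 x xs"
  by (induction xs) (auto simp: remove1_idem)

lemma del_xy:
  assumes "x \<notin> set \<alpha>" "y \<notin> set \<alpha>" "distinct \<beta>"
  shows "del_letters (\<alpha> @ \<beta>) [x, y] = \<alpha> @ remove1 y (remove1 x \<beta>)"
proof -
  have "filter (\<lambda>z. z \<notin> set [x, y]) \<alpha> = \<alpha>" using assms by (auto simp: filter_id_conv)
  moreover have "filter (\<lambda>z. z \<notin> set [x, y]) \<beta> = filter (\<lambda>z. z \<noteq> y) (filter (\<lambda>z. z \<noteq> x) \<beta>)"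
    by (simp add: conj_commute)
  moreover have "filter (\<lambda>z. z \<noteq> y) (filter (\<lambda>z. z \<noteq> x) \<beta>) = remove1 y (remove1 x \<beta>)"
    using assms(3) by (simp add: filter_neq_remove1)
  ultimately show ?thesis by (simp add: del_letters_def)
qed

lemma ws_full:
  assumes "distinct \<alpha>" "distinct b" "set b \<subseteq> set \<alpha>"
  shows "word_sign \<alpha> b = word_sign \<alpha> (b @ del_letters \<alpha> b)"
proof -
  have d: "distinct (b @ del_letters \<alpha> b)" using assms by (auto simp: del_letters_def)
  have s: "set (b @ del_letters \<alpha> b) \<subseteq> set \<alpha>" using assms by (auto simp: del_letters_def)
  have e: "del_letters \<alpha> (b @ del_letters \<alpha> b) = []" by (auto simp: del_letters_def filter_empty_conv)
  show ?thesis unfolding word_sign_def using assms d s e by (simp add: Let_def)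
qed

lemma ws2:
  assumes db: "distinct \<beta>" and x: "x \<in> set \<beta>" and y: "y \<in> set (remove1 x \<beta>)"
  shows "word_sign \<beta> [x, y] = (-1) ^ (idx \<beta> x) * ((-1) ^ (idx (remove1 x \<beta>) y) :: 'r::comm_ring_1)"
proof -
  let ?b1 = "remove1 x \<beta>"
  have db1: "distinct ?b1" using db by simp
  have xy: "x \<noteq> y" using y db by auto
  have yb: "y \<in> set \<beta>" using y set_remove1_subset by fast
  have del: "del_letters \<beta> [x, y] = remove1 y ?b1"
    using del_xy[of x "[]" y \<beta>] db by simp
  have "word_sign \<beta> [x, y] = word_sign \<beta> ([x, y] @ del_letters \<beta> [x, y])"
    by (rule ws_full) (use db xy x yb in auto)
  also have "\<dots> = (WF \<beta> (x # y # remove1 y ?b1) :: 'r)"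
  proof -
    have "distinct (x # y # remove1 y ?b1)" using db db1 y by (auto simp: distinct_remove1 dest: in_set_remove1)
    moreover have "set (x # y # remove1 y ?b1) = set \<beta>" using db x y by (auto simp: set_remove1_eq)
    ultimately show ?thesis by (simp add: del WF_def)
  qed
  finally have c: "word_sign \<beta> [x, y] = (WF \<beta> (x # y # remove1 y ?b1) :: 'r)" .
  have m1: "WF \<beta> ([x] @ y # remove1 y ?b1) = (-1) ^ (idx ?b1 y) * (WF \<beta> ([x] @ ?b1) :: 'r)"
    by (rule mtf[where F="WF \<beta>", OF WF_alt[OF db] y])
  have m2: "WF \<beta> ([] @ x # remove1 x \<beta>) = (-1) ^ (idx \<beta> x) * (WF \<beta> ([] @ \<beta>) :: 'r)"
    by (rule mtf[where F="WF \<beta>", OF WF_alt[OF db] x])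
  have w: "WF \<beta> \<beta> = (1::'r)" by (rule WF_self[OF db])
  show ?thesis using c m1 m2 w by (simp add: mult_ac)
qed

lemma pfr_xy:
  fixes f :: "'a \<Rightarrow> 'a \<Rightarrow> 'r::comm_ring_1"
  assumes anti: "\<And>u v. f u v = - f v u" and d: "distinct (\<alpha> @ [x, y])" and ev: "even (length \<alpha>)"
  shows "pfr f (\<alpha> @ [x, y]) = pfr f (x # y # \<alpha>)"
proof -
  have xa: "x \<notin> set \<alpha>" "y \<notin> set \<alpha>" "x \<noteq> y" using d by auto
  have "pfr f ([] @ y # remove1 y (\<alpha> @ [x, y])) = (-1) ^ (idx (\<alpha> @ [x, y]) y) * pfr f ([] @ \<alpha> @ [x, y])"
    by (rule pfr_mtf[where f=f, OF anti]) (use d in auto)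
  then have e1: "pfr f (y # \<alpha> @ [x]) = - pfr f (\<alpha> @ [x, y])"
    using xa ev by (simp add: idx_append remove1_append)
  have "pfr f ([y] @ x # remove1 x (\<alpha> @ [x])) = (-1) ^ (idx (\<alpha> @ [x]) x) * pfr f ([y] @ \<alpha> @ [x])"
    by (rule pfr_mtf[where f=f, OF anti]) (use d in auto)
  then have e2: "pfr f (y # x # \<alpha>) = pfr f (y # \<alpha> @ [x])"
    using xa ev by (simp add: idx_append remove1_append)
  have e3: "pfr f (x # y # \<alpha>) = - pfr f (y # x # \<alpha>)"
    by (rule pfr_swap12[where f=f, OF anti]) (use d in auto)
  show ?thesis using e1 e2 e3 by simp
qed

theorem mainTheorem1:
  fixes f :: "'a \<Rightarrow> 'a \<Rightarrow> 'r::comm_ring_1"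
    and \<alpha> \<beta> :: "'a list" and x :: 'a
  assumes antisym: "\<And>u v. f u v = - f v u"
    and diag: "\<And>u. f u u = 0"
    and dist: "distinct (\<alpha> @ \<beta>)"
    and ev_a: "even (length \<alpha>)"
    and ev_b: "even (length \<beta>)"
    and x_in: "x \<in> set \<beta>"
  shows "pf f \<alpha> * pf f (\<alpha> @ \<beta>) =
         (\<Sum>y\<in>set \<beta>. word_sign \<beta> [x, y] * pf f (\<alpha> @ [x, y])
                        * pf f (del_letters (\<alpha> @ \<beta>) [x, y]))"
proof -
  let ?b1 = "remove1 x \<beta>"
  have da: "distinct \<alpha>" and db: "distinct \<beta>" and disj: "set \<alpha> \<inter> set \<beta> = {}" using dist by auto
  have xa: "x \<notin> set \<alpha>" using x_in disj by auto
  have db1: "distinct ?b1" using db by simp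
  have xb1: "x \<notin> set ?b1" using db by simp
  have sb: "set \<beta> = insert x (set ?b1)" using db x_in by (auto simp: set_remove1_eq)
  have d1: "distinct (x # \<alpha> @ ?b1)" using dist xa xb1 by (auto simp: distinct_remove1 dest: in_set_remove1)
  have T: "Tst f \<alpha> x ?b1" by (rule T_all[OF antisym d1 ev_a])
  have p1: "pf f \<alpha> = pfr f \<alpha>" by (rule pf_pfr[OF antisym da ev_a])
  have p2: "pf f (\<alpha> @ \<beta>) = pfr f (\<alpha> @ \<beta>)" by (rule pf_pfr[OF antisym dist]) (use ev_a ev_b in simp)
  have e2: "pfr f (\<alpha> @ \<beta>) = (-1) ^ (idx \<beta> x) * pfr f (x # \<alpha> @ ?b1)"
  proof (rule sgn_swap)
    have "pfr f ([] @ x # remove1 x (\<alpha> @ \<beta>)) = (-1) ^ (idx (\<alpha> @ \<beta>) x) * pfr f ([] @ \<alpha> @ \<beta>)"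
      by (rule pfr_mtf[where f=f, OF antisym]) (use dist x_in in auto)
    then show "pfr f (x # \<alpha> @ ?b1) = (-1) ^ (idx \<beta> x) * pfr f (\<alpha> @ \<beta>)"
      using xa pow_even_add[OF ev_a, where 'r='r] by (simp add: idx_append remove1_append)
  qed
  have t0: "word_sign \<beta> [x, x] = (0::'r)" by (simp add: word_sign_def)
  have "(\<Sum>y\<in>set \<beta>. word_sign \<beta> [x, y] * pf f (\<alpha> @ [x, y]) * pf f (del_letters (\<alpha> @ \<beta>) [x, y])) =
        (\<Sum>y\<in>set ?b1. word_sign \<beta> [x, y] * pf f (\<alpha> @ [x, y]) * pf f (del_letters (\<alpha> @ \<beta>) [x, y]))"
    unfolding sb using xb1 t0 by (simp add: sum.insert)
  also have "\<dots> = (\<Sum>y\<in>set ?b1. (-1) ^ (idx \<beta> x) * ((-1) ^ (idx ?b1 y) * pfr f (x # y # \<alpha>) * pfr f (\<alpha> @ remove1 y ?b1)))"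
  proof (rule sum.cong[OF refl])
    fix y assume y: "y \<in> set ?b1"
    have yb: "y \<in> set \<beta>" using y set_remove1_subset by fast
    have ya: "y \<notin> set \<alpha>" using yb disj by auto
    have dxy: "distinct (\<alpha> @ [x, y])" using da xa ya y xb1 by auto
    have exy: "even (length (\<alpha> @ [x, y]))" using ev_a by simp
    have q1: "pf f (\<alpha> @ [x, y]) = pfr f (x # y # \<alpha>)"
      using pf_pfr[OF antisym dxy exy] pfr_xy[OF antisym dxy ev_a] by simp
    have dl: "del_letters (\<alpha> @ \<beta>) [x, y] = \<alpha> @ remove1 y ?b1" by (rule del_xy[OF xa ya db])
    have dd: "distinct (\<alpha> @ remove1 y ?b1)" using dist by (auto simp: distinct_remove1 dest: in_set_remove1)
    have l1: "length ?b1 = length \<beta> - 1" using x_in by (simp add: length_remove1)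
    have l2: "length (remove1 y ?b1) = length ?b1 - 1" using y by (simp add: length_remove1)
    have l3: "length (\<alpha> @ remove1 y ?b1) = length \<alpha> + (length \<beta> - 2)" using l1 l2 by simp
    have "even (length \<beta> - 2)" using ev_b by presburger
    then have ed: "even (length (\<alpha> @ remove1 y ?b1))" using ev_a l3 by simp
    have q2: "pf f (del_letters (\<alpha> @ \<beta>) [x, y]) = pfr f (\<alpha> @ remove1 y ?b1)"
      unfolding dl by (rule pf_pfr[OF antisym dd ed])
    show "word_sign \<beta> [x, y] * pf f (\<alpha> @ [x, y]) * pf f (del_letters (\<alpha> @ \<beta>) [x, y]) =
        (-1) ^ (idx \<beta> x) * ((-1) ^ (idx ?b1 y) * pfr f (x # y # \<alpha>) * pfr f (\<alpha> @ remove1 y ?b1))"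
      unfolding q1 q2 ws2[OF db x_in y] by (simp only: mult_ac)
  qed
  also have "\<dots> = (-1) ^ (idx \<beta> x) * (pfr f \<alpha> * pfr f (x # \<alpha> @ ?b1))"
    using T unfolding Tst_def by (simp only: sum_distrib_left)
  also have "\<dots> = pf f \<alpha> * pf f (\<alpha> @ \<beta>)" unfolding p1 p2 e2 by (simp only: mult_ac)
  finally show ?thesis by simp
qed


end
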